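(* The function $F^{(1)}$ satisfies, for $(u,v)\in\mathbb{D}^2$, $$uP_0(u)\frac{\partial F^{(1)}}{\partial u}(u,v)+v\left[\rho(1-q)-(1+\rho-v)(u-q)\right]\frac{\partial F^{(1)}}{\partial v}(u,v)+\left[u(u-1-\rho)+(u-q)(u+v)\right]F^{(1)}(u,v)+L^{(1)}(u,v)=0,$$ where $P_0(u)=(1-u)(\rho+q-u)$ and $$L^{(1)}(u,v)=L^{(1)}_0(u,v)+(u+v)E^{(1)}(v)-v(1+\rho-v)\frac{dE^{(1)}}{dv}(v),$$ $$L^{(1)}_0(u,v)=-\frac{v(1-uv)}{(1-u)^2(1-v)^2}=\sum_{b\ge1}k^{(1)}_b(u)v^b,\qquad k^{(1)}_b(u)=-\frac{u}{(1-u)^2}-\frac{b}{1-u}.$$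
   Context: Queueing model: an $M^{[X]}/M/1$ processor-sharing queue with Poisson batch arrivals of rate $\rho>0$, exponential job services of mean $1$, unit capacity shared equally among jobs present, all random quantities independent; geometric batch sizes $\mathbb{P}(B=b)=(1-q)q^{b-1}$, $q\in(0,1)$, $\rho+q<1$. For $n\ge0,b\ge1$, $\Omega_{n,b}$ is the sojourn time of a tagged batch (arrival to departure of its last job) given $n$ jobs present at its arrival and batch size $b$. $\mathbb{D}$ is the open unit disk. Define $E^{(1)}(u,v)=-\sum_{n\ge0}\sum_{b\ge1}\mathbb{E}(\Omega_{n,b})u^nv^b$ (the coefficient of $s$ in the expansion as $s\to0$ of $\sum_{n,b}\mathbb{E}(e^{-s\Omega_{n,b}})u^nv^b$), $E^{(1)}(v)=E^{(1)}(q,v)$, and $F^{(1)}(u,v)=\frac{E^{(1)}(u,v)-E^{(1)}(q,v)}{u-q}$ for $u\ne q$, $F^{(1)}(q,v)=\frac{\partial E^{(1)}}{\partial u}(q,v)$. *)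

theory Defs
  imports "HOL-Probability.Probability" "HOL-Analysis.Analysis"
begin

text \<open>Batch size B with P(B = b) = (1-q) q^(b-1), b >= 1.\<close>
definition batch_pmf :: "real \<Rightarrow> nat pmf" where
  "batch_pmf q = map_pmf Suc (geometric_pmf (1 - q))"

text \<open>Embedded jump chain of the state (m, k) seen by a tagged batch in the
  M^[X]/M/1 processor-sharing queue: m = other jobs present, k = remaining
  jobs of the tagged batch.  While k > 0 the total event rate is rho + 1
  (batch arrivals at rate rho; job completions at total rate 1, the completing
  job being uniform among the m + k present jobs).  k = 0 is absorbing
  (departure of the last job of the tagged batch).\<close>
definition ps_step :: "real \<Rightarrow> real \<Rightarrow> nat \<times> nat \<Rightarrow> (nat \<times> nat) pmf" where
  "ps_step rho q s = (case s of (m, k) \<Rightarrow>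
     if k = 0 then return_pmf (m, k)
     else bind_pmf (bernoulli_pmf (rho / (1 + rho))) (\<lambda>a.
       if a then map_pmf (\<lambda>b. (m + b, k)) (batch_pmf q)
       else map_pmf (\<lambda>t. if t then (m, k - 1) else (m - 1, k))
              (bernoulli_pmf (real k / real (m + k)))))"

primrec ps_chain :: "real \<Rightarrow> real \<Rightarrow> nat \<Rightarrow> nat \<times> nat \<Rightarrow> (nat \<times> nat) pmf" where
  "ps_chain rho q 0 s = return_pmf s"
| "ps_chain rho q (Suc t) s = bind_pmf (ps_chain rho q t s) (ps_step rho q)"

text \<open>Mean sojourn time E(Omega_{n,b}): each visit to a non-absorbed state
  has an Exp(1+rho) holding time of mean 1/(1+rho), so the mean sojourn time
  is the sum over steps of P(not yet departed)/(1+rho).\<close>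
definition mean_sojourn :: "real \<Rightarrow> real \<Rightarrow> nat \<Rightarrow> nat \<Rightarrow> real" where
  "mean_sojourn rho q n b =
     (\<Sum>t. measure_pmf.prob (ps_chain rho q t (n, b)) {s. 0 < snd s} / (1 + rho))"

definition E1 :: "real \<Rightarrow> real \<Rightarrow> complex \<Rightarrow> complex \<Rightarrow> complex" where
  "E1 rho q u v = - infsum (\<lambda>(n, b). complex_of_real (mean_sojourn rho q n b) * u ^ n * v ^ b)
                        (UNIV \<times> {1..})"

definition E1v :: "real \<Rightarrow> real \<Rightarrow> complex \<Rightarrow> complex" where
  "E1v rho q v = E1 rho q (complex_of_real q) v"

definition F1 :: "real \<Rightarrow> real \<Rightarrow> complex \<Rightarrow> complex \<Rightarrow> complex" where
  "F1 rho q u v = (if u = complex_of_real q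
      then deriv (\<lambda>w. E1 rho q w v) u
      else (E1 rho q u v - E1 rho q (complex_of_real q) v) / (u - complex_of_real q))"

definition P0 :: "real \<Rightarrow> real \<Rightarrow> complex \<Rightarrow> complex" where
  "P0 rho q u = (1 - u) * (complex_of_real rho + complex_of_real q - u)"

definition L10 :: "complex \<Rightarrow> complex \<Rightarrow> complex" where
  "L10 u v = - (v * (1 - u * v)) / ((1 - u)^2 * (1 - v)^2)"

definition k1 :: "nat \<Rightarrow> complex \<Rightarrow> complex" where
  "k1 b u = - u / (1 - u)^2 - of_nat b / (1 - u)"

definition L1 :: "real \<Rightarrow> real \<Rightarrow> complex \<Rightarrow> complex \<Rightarrow> complex" where
  "L1 rho q u v = L10 u v + (u + v) * E1v rho q v
      - v * (1 + complex_of_real rho - v) * deriv (E1v rho q) v"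

end

theory Submission
  imports Defs
begin


lemma summable_poly_geom:
  fixes x :: real
  assumes "\<bar>x\<bar> < 1"
  shows "summable (\<lambda>n. (real n + 1) ^ k * x ^ n)"
  using assms
proof (induction k arbitrary: x)
  case 0
  then show ?case using summable_geometric[of x] by simp
next
  case (Suc k)
  define c where "c = (\<lambda>n::nat. (real n + 1) ^ k)"
  have "summable (\<lambda>n. diffs c n * \<bar>x\<bar> ^ n)"
    by (rule termdiff_converges[where K=1]) (use Suc in \<open>auto simp: c_def\<close>)
  show ?case
  proof (rule summable_comparison_test[OF _ \<open>summable (\<lambda>n. diffs c n * \<bar>x\<bar> ^ n)\<close>])
    show "\<exists>N. \<forall>n\<ge>N. norm ((real n + 1) ^ Suc k * x ^ n) \<le> diffs c n * \<bar>x\<bar> ^ n"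
    proof (intro exI allI impI)
      fix n :: nat
      have h: "(real n + 1) ^ k \<le> (real (Suc n) + 1) ^ k" by (intro power_mono) auto
      have "(real n + 1) * (real n + 1) ^ k \<le> (real n + 1) * (real (Suc n) + 1) ^ k"
        by (rule mult_left_mono[OF h]) simp
      then have "(real n + 1) ^ Suc k \<le> (real n + 1) * (real (Suc n) + 1) ^ k"
        by simp
      then have "(real n + 1) ^ Suc k * \<bar>x\<bar> ^ n \<le> (real n + 1) * (real (Suc n) + 1) ^ k * \<bar>x\<bar> ^ n"
        by (rule mult_right_mono) simp
      moreover have "diffs c n = (real n + 1) * (real (Suc n) + 1) ^ k"
        by (simp add: diffs_def c_def)
      moreover have "norm ((real n + 1) ^ Suc k * x ^ n) = (real n + 1) ^ Suc k * \<bar>x\<bar> ^ n"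
        by (simp add: abs_mult power_abs)
      ultimately show "norm ((real n + 1) ^ Suc k * x ^ n) \<le> diffs c n * \<bar>x\<bar> ^ n"
        by simp
    qed
  qed
qed

lemma summable_on_poly_geom:
  fixes x :: real
  assumes "0 \<le> x" "x < 1"
  shows "(\<lambda>n. (real n + 1) ^ k * x ^ n) summable_on UNIV"
  using summable_poly_geom[of x k] assms
  by (subst summable_on_UNIV_nonneg_real_iff) auto

lemma real2d_summable:
  fixes r s :: real
  assumes "0 \<le> r" "r < 1" "0 \<le> s" "s < 1"
  shows "(\<lambda>(j,b). ((real j + 1) * (real b + 1)) ^ k * (r ^ j * s ^ b)) summable_on UNIV"
proof -
  define H where "H = infsum (\<lambda>b. (real b + 1) ^ k * s ^ b) UNIV"
  have hH: "((\<lambda>b. (real b + 1) ^ k * s ^ b) has_sum H) UNIV"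
    unfolding H_def using summable_on_poly_geom[OF assms(3,4)] by simp
  have "(\<lambda>(j,b). ((real j + 1) * (real b + 1)) ^ k * (r ^ j * s ^ b)) summable_on Sigma UNIV (\<lambda>_. UNIV)"
  proof (rule summable_on_SigmaI[where g = "\<lambda>j. ((real j + 1) ^ k * r ^ j) * H"])
    fix j :: nat
    show "((\<lambda>b. (\<lambda>(j,b). ((real j + 1) * (real b + 1)) ^ k * (r ^ j * s ^ b)) (j, b)) has_sum
        ((real j + 1) ^ k * r ^ j) * H) UNIV"
      using has_sum_cmult_right[OF hH, of "(real j + 1) ^ k * r ^ j"]
      by (simp add: power_mult_distrib mult_ac)
  next
    show "(\<lambda>j. ((real j + 1) ^ k * r ^ j) * H) summable_on UNIV"
      by (intro summable_on_cmult_left summable_on_poly_geom assms)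
  next
    fix j b :: nat
    show "0 \<le> (\<lambda>(j,b). ((real j + 1) * (real b + 1)) ^ k * (r ^ j * s ^ b)) (j, b)"
      using assms by simp
  qed
  then show ?thesis by simp
qed

definition pb :: "(nat \<times> nat \<Rightarrow> complex) \<Rightarrow> bool" where
  "pb c \<longleftrightarrow> (\<exists>M\<ge>0. \<exists>k. \<forall>j b. norm (c (j,b)) \<le> M * ((real j + 1) * (real b + 1)) ^ k)"

definition PS2 :: "(nat \<times> nat \<Rightarrow> complex) \<Rightarrow> complex \<Rightarrow> complex \<Rightarrow> complex" where
  "PS2 c u v = infsum (\<lambda>(j,b). c (j,b) * u ^ j * v ^ b) UNIV"

lemma pb_abs_summable:
  assumes "pb c" "norm u < 1" "norm v < 1"
  shows "(\<lambda>x. norm ((\<lambda>(j,b). c (j,b) * u ^ j * v ^ b) x)) summable_on UNIV"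
proof -
  obtain M k where M: "M \<ge> 0" "\<And>j b. norm (c (j,b)) \<le> M * ((real j + 1) * (real b + 1)) ^ k"
    using assms(1) unfolding pb_def by blast
  have sm: "(\<lambda>x. M * (\<lambda>(j,b). ((real j + 1) * (real b + 1)) ^ k * (norm u ^ j * norm v ^ b)) x) summable_on UNIV"
    by (rule summable_on_cmult_right[OF real2d_summable]) (use assms in auto)
  show ?thesis
  proof (rule Infinite_Sum.abs_summable_on_comparison_test'[OF sm])
    fix x :: "nat \<times> nat"
    obtain j b where x: "x = (j,b)" by (cases x)
    have "norm (c (j,b) * u ^ j * v ^ b) = norm (c (j,b)) * (norm u ^ j * norm v ^ b)"
      by (simp add: norm_mult norm_power)
    also have "\<dots> \<le> M * ((real j + 1) * (real b + 1)) ^ k * (norm u ^ j * norm v ^ b)"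
      by (intro mult_right_mono M) auto
    finally show "norm ((\<lambda>(j,b). c (j,b) * u ^ j * v ^ b) x)
        \<le> M * (\<lambda>(j,b). ((real j + 1) * (real b + 1)) ^ k * (norm u ^ j * norm v ^ b)) x"
      by (simp add: x mult_ac)
  qed
qed

lemma pb_summable:
  assumes "pb c" "norm u < 1" "norm v < 1"
  shows "(\<lambda>(j,b). c (j,b) * u ^ j * v ^ b) summable_on UNIV"
  using abs_summable_summable[OF pb_abs_summable[OF assms]] .

lemma PS2_has_sum:
  assumes "pb c" "norm u < 1" "norm v < 1"
  shows "((\<lambda>(j,b). c (j,b) * u ^ j * v ^ b) has_sum PS2 c u v) UNIV"
  using pb_summable[OF assms] unfolding PS2_def by simp



lemma pbI: "M \<ge> 0 \<Longrightarrow> (\<And>j b. norm (c (j,b)) \<le> M * ((real j + 1) * (real b + 1)) ^ k) \<Longrightarrow> pb c"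
  unfolding pb_def by blast

lemma pbE:
  assumes "pb c"
  obtains M k where "M \<ge> 0" "\<And>j b. norm (c (j,b)) \<le> M * ((real j + 1) * (real b + 1)) ^ k"
  using assms unfolding pb_def by blast

lemma base_ge1: "1 \<le> (real j + 1) * (real b + 1)"
proof -
  have "1 * 1 \<le> (real j + 1) * (real b + 1)" by (rule mult_mono) auto
  then show ?thesis by simp
qed

lemma pow_mono_base: "k \<le> k' \<Longrightarrow> ((real j + 1) * (real b + 1)) ^ k \<le> ((real j + 1) * (real b + 1)) ^ k'"
  by (rule power_increasing) (auto simp: base_ge1)

lemma pb_0[simp, intro]: "pb (\<lambda>x. 0)"
  by (rule pbI[of 0 _ 0]) auto

lemma pb_add[intro]:
  assumes "pb c1" "pb c2" shows "pb (\<lambda>x. c1 x + c2 x)"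
proof -
  obtain M1 k1 where 1: "M1 \<ge> 0" "\<And>j b. norm (c1 (j,b)) \<le> M1 * ((real j + 1) * (real b + 1)) ^ k1"
    using assms(1) unfolding pb_def by blast
  obtain M2 k2 where 2: "M2 \<ge> 0" "\<And>j b. norm (c2 (j,b)) \<le> M2 * ((real j + 1) * (real b + 1)) ^ k2"
    using assms(2) unfolding pb_def by blast
  show ?thesis
  proof (rule pbI[of "M1 + M2" _ "max k1 k2"])
    fix j b
    have "norm (c1 (j,b) + c2 (j,b)) \<le> norm (c1 (j,b)) + norm (c2 (j,b))" by (rule norm_triangle_ineq)
    also have "\<dots> \<le> M1 * ((real j + 1) * (real b + 1)) ^ max k1 k2 + M2 * ((real j + 1) * (real b + 1)) ^ max k1 k2"
    proof (rule add_mono)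
      show "norm (c1 (j,b)) \<le> M1 * ((real j + 1) * (real b + 1)) ^ max k1 k2"
        by (rule order_trans[OF 1(2)], rule mult_left_mono[OF pow_mono_base]) (use 1 in auto)
      show "norm (c2 (j,b)) \<le> M2 * ((real j + 1) * (real b + 1)) ^ max k1 k2"
        by (rule order_trans[OF 2(2)], rule mult_left_mono[OF pow_mono_base]) (use 2 in auto)
    qed
    finally show "norm (c1 (j,b) + c2 (j,b)) \<le> (M1 + M2) * ((real j + 1) * (real b + 1)) ^ max k1 k2"
      by (simp add: distrib_right)
  qed (use 1 2 in auto)
qed

lemma pb_cmult[intro]:
  assumes "pb c" shows "pb (\<lambda>x. a * c x)"
proof -
  obtain M k where 1: "M \<ge> 0" "\<And>j b. norm (c (j,b)) \<le> M * ((real j + 1) * (real b + 1)) ^ k"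
    using assms(1) unfolding pb_def by blast
  show ?thesis
  proof (rule pbI[of "norm a * M" _ k])
    fix j b
    show "norm (a * c (j,b)) \<le> norm a * M * ((real j + 1) * (real b + 1)) ^ k"
      using mult_left_mono[OF 1(2)[of j b], of "norm a"] by (simp add: norm_mult mult_ac)
  qed (use 1 in auto)
qed

lemma pb_mono:
  assumes "pb c" "\<And>j b. norm (d (j,b)) \<le> norm (c (j,b))" shows "pb d"
proof -
  obtain M k where 1: "M \<ge> 0" "\<And>j b. norm (c (j,b)) \<le> M * ((real j + 1) * (real b + 1)) ^ k"
    using assms(1) unfolding pb_def by blast
  show ?thesis
  proof (rule pbI[of M _ k])
    fix j b show "norm (d (j,b)) \<le> M * ((real j + 1) * (real b + 1)) ^ k"
      using order_trans[OF assms(2) 1(2)] .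
  qed (use 1 in auto)
qed

lemma pb_mulj[intro]:
  assumes "pb c" shows "pb (\<lambda>(j,b). of_nat j * c (j,b))"
proof -
  obtain M k where 1: "M \<ge> 0" "\<And>j b. norm (c (j,b)) \<le> M * ((real j + 1) * (real b + 1)) ^ k"
    using assms(1) unfolding pb_def by blast
  show ?thesis
  proof (rule pbI[of M _ "Suc k"])
    fix j b
    have "real j \<le> (real j + 1) * (real b + 1)" by (simp add: algebra_simps)
    then have "real j * norm (c (j,b)) \<le> ((real j + 1) * (real b + 1)) * (M * ((real j + 1) * (real b + 1)) ^ k)"
      using 1 by (intro mult_mono) auto
    then show "norm ((\<lambda>(j,b). of_nat j * c (j,b)) (j,b)) \<le> M * ((real j + 1) * (real b + 1)) ^ Suc k"
      by (simp add: norm_mult mult_ac)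
  qed (use 1 in auto)
qed

lemma pb_swap[intro]:
  assumes "pb c" shows "pb (\<lambda>(j,b). c (b,j))"
proof -
  obtain M k where 1: "M \<ge> 0" "\<And>j b. norm (c (j,b)) \<le> M * ((real j + 1) * (real b + 1)) ^ k"
    using assms(1) unfolding pb_def by blast
  show ?thesis
  proof (rule pbI[of M _ k])
    fix j b
    have e: "((real b + 1) * (real j + 1)) = ((real j + 1) * (real b + 1))" by (rule mult.commute)
    show "norm ((\<lambda>(j,b). c (b,j)) (j,b)) \<le> M * ((real j + 1) * (real b + 1)) ^ k"
      using 1(2)[of b j] unfolding e by simp
  qed (use 1 in auto)
qed

lemma pb_mulb[intro]:
  assumes "pb c" shows "pb (\<lambda>(j,b). of_nat b * c (j,b))"
proof -
  have "pb (\<lambda>(j,b). (\<lambda>(j,b). of_nat j * (\<lambda>(j,b). c (b,j)) (j,b)) (b,j))"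
    using assms by blast
  then show ?thesis by (rule pb_mono) auto
qed

lemma pb_downu[intro]:
  assumes "pb c" shows "pb (\<lambda>(j,b). c (Suc j, b))"
proof -
  obtain M k where 1: "M \<ge> 0" "\<And>j b. norm (c (j,b)) \<le> M * ((real j + 1) * (real b + 1)) ^ k"
    using assms(1) unfolding pb_def by blast
  show ?thesis
  proof (rule pbI[of "M * 2 ^ k" _ k])
    fix j b
    have "(real (Suc j) + 1) * (real b + 1) \<le> 2 * ((real j + 1) * (real b + 1))"
      by (simp add: algebra_simps)
    then have "((real (Suc j) + 1) * (real b + 1)) ^ k \<le> (2 * ((real j + 1) * (real b + 1))) ^ k"
      by (intro power_mono) auto
    then have "M * ((real (Suc j) + 1) * (real b + 1)) ^ k \<le> M * (2 * ((real j + 1) * (real b + 1))) ^ k"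
      using 1 by (intro mult_left_mono) auto
    then show "norm ((\<lambda>(j,b). c (Suc j, b)) (j,b)) \<le> M * 2 ^ k * ((real j + 1) * (real b + 1)) ^ k"
      using 1(2)[of "Suc j" b] by (simp add: power_mult_distrib mult_ac)
  qed (use 1 in auto)
qed

lemma pb_downv[intro]:
  assumes "pb c" shows "pb (\<lambda>(j,b). c (j, Suc b))"
proof -
  have "pb (\<lambda>(j,b). (\<lambda>(j,b). (\<lambda>(j,b). c (b,j)) (Suc j, b)) (b,j))"
    using assms by blast
  then show ?thesis by (rule pb_mono) auto
qed

lemma pb_shiftu[intro]:
  assumes "pb c" shows "pb (\<lambda>(j,b). if j = 0 then 0 else c (j - 1, b))"
proof -
  obtain M k where 1: "M \<ge> 0" "\<And>j b. norm (c (j,b)) \<le> M * ((real j + 1) * (real b + 1)) ^ k"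
    using assms(1) unfolding pb_def by blast
  show ?thesis
  proof (rule pbI[of M _ k])
    fix j b
    show "norm ((\<lambda>(j,b). if j = 0 then 0 else c (j - 1, b)) (j,b)) \<le> M * ((real j + 1) * (real b + 1)) ^ k"
    proof (cases j)
      case (Suc i)
      have "((real i + 1) * (real b + 1)) ^ k \<le> ((real j + 1) * (real b + 1)) ^ k"
        using Suc by (intro power_mono mult_right_mono) auto
      then have "M * ((real i + 1) * (real b + 1)) ^ k \<le> M * ((real j + 1) * (real b + 1)) ^ k"
        using 1(1) by (rule mult_left_mono)
      then show ?thesis using 1(2)[of i b] Suc by simp
    qed (use 1 in simp)
  qed (use 1 in auto)
qed

lemma pb_shiftv[intro]:
  assumes "pb c" shows "pb (\<lambda>(j,b). if b = 0 then 0 else c (j, b - 1))"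
proof -
  have "pb (\<lambda>(j,b). (\<lambda>(j,b). if j = 0 then 0 else (\<lambda>(j,b). c (b,j)) (j - 1, b)) (b,j))"
    using assms by blast
  then show ?thesis by (rule pb_mono) auto
qed

lemma pb_j0[intro]:
  assumes "pb c" shows "pb (\<lambda>(j,b). if j = 0 then c (j,b) else 0)"
  by (rule pb_mono[OF assms]) auto



lemma PS2_iter:
  assumes "pb c" "norm u < 1" "norm v < 1"
  shows "summable (\<lambda>j. norm (infsum (\<lambda>b. c (j,b) * v ^ b) UNIV * u ^ j))"
    and "PS2 c u v = (\<Sum>j. infsum (\<lambda>b. c (j,b) * v ^ b) UNIV * u ^ j)"
proof -
  define f where "f = (\<lambda>(j,b). c (j,b) * u ^ j * v ^ b)"
  define a where "a = (\<lambda>j. infsum (\<lambda>b. c (j,b) * v ^ b) UNIV)"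
  have fs: "f summable_on UNIV" unfolding f_def by (rule pb_summable[OF assms])
  have fa: "(\<lambda>x. norm (f x)) summable_on UNIV" unfolding f_def by (rule pb_abs_summable[OF assms])
  have inner: "infsum (\<lambda>b. f (j,b)) UNIV = a j * u ^ j" for j
  proof -
    have "infsum (\<lambda>b. f (j,b)) UNIV = infsum (\<lambda>b. (c (j,b) * v ^ b) * u ^ j) UNIV"
      by (simp add: f_def mult_ac)
    also have "\<dots> = a j * u ^ j" unfolding a_def by (rule infsum_cmult_left')
    finally show ?thesis .
  qed
  have UU: "(UNIV :: (nat \<times> nat) set) = Sigma UNIV (\<lambda>_. UNIV)" by auto
  have fa': "(\<lambda>x. norm (f x)) summable_on Sigma UNIV (\<lambda>_. UNIV)" using fa unfolding UU .
  have ex: "(\<lambda>b. norm (f (j,b))) summable_on UNIV" for j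
    using Infinite_Sum.abs_summable_on_Sigma_iff[THEN iffD1, OF fa'] by blast
  have "(\<lambda>j. norm (infsum (\<lambda>b. norm (f (j,b))) UNIV)) summable_on UNIV"
    using Infinite_Sum.abs_summable_on_Sigma_iff[THEN iffD1, OF fa'] by blast
  then have "(\<lambda>j. infsum (\<lambda>b. norm (f (j,b))) UNIV) summable_on UNIV"
    by (simp add: infsum_nonneg)
  have nb: "norm (a j * u ^ j) \<le> infsum (\<lambda>b. norm (f (j,b))) UNIV" for j
  proof -
    have "norm (a j * u ^ j) = norm (infsum (\<lambda>b. f (j,b)) UNIV)" by (simp add: inner)
    also have "\<dots> \<le> infsum (\<lambda>b. norm (f (j,b))) UNIV"
      by (rule norm_infsum_bound) (use ex in auto)
    finally show ?thesis .
  qed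
  have s1: "summable (\<lambda>j. infsum (\<lambda>b. norm (f (j,b))) UNIV)"
    using \<open>(\<lambda>j. infsum (\<lambda>b. norm (f (j,b))) UNIV) summable_on UNIV\<close>
    by (subst (asm) summable_on_UNIV_nonneg_real_iff) (auto intro: infsum_nonneg)
  show sm: "summable (\<lambda>j. norm (infsum (\<lambda>b. c (j,b) * v ^ b) UNIV * u ^ j))"
    by (rule summable_comparison_test[OF _ s1]) (use nb in \<open>auto simp: a_def\<close>)
  have "PS2 c u v = infsum f UNIV" unfolding PS2_def f_def ..
  also have "\<dots> = infsum (\<lambda>j. infsum (\<lambda>b. f (j,b)) UNIV) UNIV"
    using fs unfolding UU by (rule infsum_Sigma_banach[symmetric])
  also have "\<dots> = infsum (\<lambda>j. a j * u ^ j) UNIV" by (simp add: inner)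
  also have "\<dots> = (\<Sum>j. a j * u ^ j)"
  proof -
    have "((\<lambda>j. a j * u ^ j) has_sum (\<Sum>j. a j * u ^ j)) UNIV"
      by (rule norm_summable_imp_has_sum) (use sm in \<open>auto simp: a_def intro: summable_norm_cancel summable_sums\<close>)
    then show ?thesis by (simp add: infsumI)
  qed
  finally show "PS2 c u v = (\<Sum>j. infsum (\<lambda>b. c (j,b) * v ^ b) UNIV * u ^ j)" unfolding a_def .
qed



lemma PS2_deriv_u:
  assumes "pb c" "norm u < 1" "norm v < 1"
  shows "((\<lambda>w. PS2 c w v) has_field_derivative PS2 (\<lambda>(j,b). of_nat (Suc j) * c (Suc j, b)) u v) (at u)"
proof -
  define a where "a = (\<lambda>j. infsum (\<lambda>b. c (j,b) * v ^ b) UNIV)"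
  define c' where "c' = (\<lambda>(j,b). of_nat (Suc j) * c (Suc j, b))"
  have pc': "pb c'" unfolding c'_def
  proof -
    have "pb (\<lambda>(j,b). (\<lambda>(j,b). of_nat j * c (j,b)) (Suc j, b))" using assms(1) by blast
    then show "pb (\<lambda>(j,b). of_nat (Suc j) * c (Suc j, b))" by (rule pb_mono) auto
  qed
  have sm: "summable (\<lambda>n. a n * z ^ n)" if "norm z < 1" for z
    using PS2_iter(1)[OF assms(1) that assms(3)] unfolding a_def by (rule summable_norm_cancel)
  have d: "((\<lambda>z. \<Sum>n. a n * z ^ n) has_field_derivative (\<Sum>n. diffs a n * u ^ n)) (at u)"
    by (rule termdiffs_strong'[where K=1]) (use sm assms in auto)
  have "diffs a n = infsum (\<lambda>b. c' (n,b) * v ^ b) UNIV" for n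
    by (simp add: diffs_def a_def c'_def infsum_cmult_right'[symmetric] mult_ac)
  then have "(\<Sum>n. diffs a n * u ^ n) = PS2 c' u v"
    using PS2_iter(2)[OF pc' assms(2,3)] by simp
  with d have d2: "((\<lambda>z. \<Sum>n. a n * z ^ n) has_field_derivative PS2 c' u v) (at u)" by simp
  show ?thesis unfolding c'_def[symmetric]
  proof (rule has_field_derivative_transform_within_open[OF d2, of "ball 0 1"])
    show "u \<in> ball 0 1" using assms by auto
    fix z :: complex assume "z \<in> ball 0 1"
    then show "(\<Sum>n. a n * z ^ n) = PS2 c z v"
      using PS2_iter(2)[OF assms(1) _ assms(3), of z] by (simp add: a_def)
  qed auto
qed

lemma PS2_swap:
  assumes "pb c" "norm u < 1" "norm v < 1"
  shows "PS2 c u v = PS2 (\<lambda>(j,b). c (b,j)) v u"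
proof -
  have h: "((\<lambda>(j,b). c (j,b) * u ^ j * v ^ b) has_sum PS2 c u v) (UNIV \<times> UNIV)"
    using PS2_has_sum[OF assms] by simp
  have 1: "((\<lambda>(x,y). (\<lambda>(j,b). c (j,b) * u ^ j * v ^ b) (y,x)) has_sum PS2 c u v) (UNIV \<times> UNIV)"
    using h has_sum_swap by blast
  have 2: "((\<lambda>(j,b). (\<lambda>(j,b). c (b,j)) (j,b) * v ^ j * u ^ b) has_sum PS2 (\<lambda>(j,b). c (b,j)) v u) (UNIV \<times> UNIV)"
    using PS2_has_sum[OF pb_swap[OF assms(1)] assms(3,2)] by simp
  have 3: "(\<lambda>(x,y). (\<lambda>(j,b). c (j,b) * u ^ j * v ^ b) (y,x)) =
      (\<lambda>(j,b). (\<lambda>(j,b). c (b,j)) (j,b) * v ^ j * u ^ b)"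
    by (simp add: fun_eq_iff mult_ac)
  show ?thesis
    using has_sum_unique[OF 1[unfolded 3] 2] .
qed

lemma PS2_deriv_v:
  assumes "pb c" "norm u < 1" "norm v < 1"
  shows "((\<lambda>w. PS2 c u w) has_field_derivative PS2 (\<lambda>(j,b). of_nat (Suc b) * c (j, Suc b)) u v) (at v)"
proof -
  define d where "d = (\<lambda>(j,b). c (b,j))"
  have pd: "pb d" unfolding d_def using assms(1) by blast
  have D: "((\<lambda>w. PS2 d w u) has_field_derivative PS2 (\<lambda>(j,b). of_nat (Suc j) * d (Suc j, b)) v u) (at v)"
    by (rule PS2_deriv_u[OF pd assms(3,2)])
  have pe: "pb (\<lambda>(j,b). of_nat (Suc b) * c (j, Suc b))"
  proof -
    have "pb (\<lambda>(j,b). (\<lambda>(j,b). of_nat b * c (j,b)) (j, Suc b))" using assms(1) by blast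
    then show ?thesis by (rule pb_mono) auto
  qed
  have e: "PS2 (\<lambda>(j,b). of_nat (Suc j) * d (Suc j, b)) v u = PS2 (\<lambda>(j,b). of_nat (Suc b) * c (j, Suc b)) u v"
    using PS2_swap[OF pe assms(2,3)] by (simp add: d_def)
  show ?thesis
  proof (rule has_field_derivative_transform_within_open[OF D[unfolded e], of "ball 0 1"])
    show "v \<in> ball 0 1" using assms by auto
    fix z :: complex assume "z \<in> ball 0 1"
    then show "PS2 d z u = PS2 c u z"
      using PS2_swap[OF assms(1) assms(2), of z] by (simp add: d_def)
  qed auto
qed

lemma PS2_add:
  assumes "pb c1" "pb c2" "norm u < 1" "norm v < 1"
  shows "PS2 (\<lambda>x. c1 x + c2 x) u v = PS2 c1 u v + PS2 c2 u v"
proof -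
  have "((\<lambda>x. (\<lambda>(j,b). c1 (j,b) * u ^ j * v ^ b) x + (\<lambda>(j,b). c2 (j,b) * u ^ j * v ^ b) x) has_sum (PS2 c1 u v + PS2 c2 u v)) UNIV"
    by (rule has_sum_add; rule PS2_has_sum) (use assms in auto)
  moreover have "(\<lambda>x. (\<lambda>(j,b). c1 (j,b) * u ^ j * v ^ b) x + (\<lambda>(j,b). c2 (j,b) * u ^ j * v ^ b) x)
      = (\<lambda>(j,b). (\<lambda>x. c1 x + c2 x) (j,b) * u ^ j * v ^ b)"
    by (auto simp: fun_eq_iff algebra_simps)
  ultimately have "((\<lambda>(j,b). (\<lambda>x. c1 x + c2 x) (j,b) * u ^ j * v ^ b) has_sum (PS2 c1 u v + PS2 c2 u v)) UNIV"
    by simp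
  then show ?thesis unfolding PS2_def by (rule infsumI)
qed

lemma PS2_cmult: "PS2 (\<lambda>x. a * c x) u v = a * PS2 c u v"
proof -
  have "(\<lambda>(j,b). a * c (j,b) * u ^ j * v ^ b) = (\<lambda>x. a * (\<lambda>(j,b). c (j,b) * u ^ j * v ^ b) x)"
    by (auto simp: fun_eq_iff mult_ac)
  then show ?thesis unfolding PS2_def by (simp add: infsum_cmult_right')
qed

lemma PS2_zero: "PS2 (\<lambda>x. 0) u v = 0"
proof -
  have "(\<lambda>(j::nat,b::nat). 0 * u ^ j * v ^ b) = (\<lambda>_. 0)" by auto
  then show ?thesis unfolding PS2_def by simp
qed

lemma PS2_shiftu:
  assumes "pb c" "norm u < 1" "norm v < 1"
  shows "PS2 (\<lambda>(j,b). if j = 0 then 0 else c (j - 1, b)) u v = u * PS2 c u v"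
proof -
  define g where "g = (\<lambda>(j,b). (if j = 0 then 0 else c (j - 1, b)) * u ^ j * v ^ b)"
  define h where "h = (\<lambda>(j::nat,b::nat). (Suc j, b))"
  have "((\<lambda>x. u * (\<lambda>(j,b). c (j,b) * u ^ j * v ^ b) x) has_sum (u * PS2 c u v)) UNIV"
    by (rule has_sum_cmult_right, rule PS2_has_sum[OF assms])
  moreover have "(\<lambda>x. u * (\<lambda>(j,b). c (j,b) * u ^ j * v ^ b) x) = g \<circ> h"
    by (auto simp: fun_eq_iff g_def h_def mult_ac)
  ultimately have "((g \<circ> h) has_sum (u * PS2 c u v)) UNIV" by simp
  then have "(g has_sum (u * PS2 c u v)) (h ` UNIV)"
    by (subst has_sum_reindex) (auto simp: inj_on_def h_def)
  then have "(g has_sum (u * PS2 c u v)) UNIV"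
  proof (subst (asm) has_sum_cong_neutral[where T = UNIV and g = g])
    fix x assume "x \<in> UNIV - h ` UNIV"
    then obtain b where "x = (0, b)"
      by (cases x) (metis (no_types, lifting) DiffE h_def old.nat.exhaust rangeI split_conv)
    then show "g x = 0" by (simp add: g_def)
  qed auto
  then have X: "infsum g UNIV = u * PS2 c u v" by (rule infsumI)
  then show ?thesis unfolding PS2_def g_def by (simp cong: if_cong)
qed

lemma PS2_shiftv:
  assumes "pb c" "norm u < 1" "norm v < 1"
  shows "PS2 (\<lambda>(j,b). if b = 0 then 0 else c (j, b - 1)) u v = v * PS2 c u v"
proof -
  have p1: "pb (\<lambda>(j,b). if b = 0 then 0 else c (j, b - 1))" using assms(1) by blast
  have p2: "pb (\<lambda>(j, b). c (b, j))" using assms(1) by blast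
  have "PS2 (\<lambda>(j,b). if b = 0 then 0 else c (j, b - 1)) u v
      = PS2 (\<lambda>(j,b). if j = 0 then 0 else (\<lambda>(j,b). c (b,j)) (j - 1, b)) v u"
    using PS2_swap[OF p1 assms(2,3)] by (simp cong: if_cong)
  also have "\<dots> = v * PS2 (\<lambda>(j,b). c (b,j)) v u"
    by (rule PS2_shiftu[OF p2 assms(3,2)])
  also have "\<dots> = v * PS2 c u v"
    using PS2_swap[OF assms] by simp
  finally show ?thesis .
qed



lemma chain_Suc': "ps_chain rho q (Suc t) s = bind_pmf (ps_step rho q s) (ps_chain rho q t)"
proof (induction t arbitrary: s)
  case 0
  then show ?case by (simp add: bind_return_pmf bind_return_pmf')
next
  case (Suc t)
  have "ps_chain rho q (Suc (Suc t)) s = bind_pmf (ps_chain rho q (Suc t) s) (ps_step rho q)" by simp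
  also have "\<dots> = bind_pmf (bind_pmf (ps_step rho q s) (ps_chain rho q t)) (ps_step rho q)"
    by (simp only: Suc)
  also have "\<dots> = bind_pmf (ps_step rho q s) (\<lambda>x. bind_pmf (ps_chain rho q t x) (ps_step rho q))"
    by (simp add: bind_assoc_pmf)
  also have "(\<lambda>x. bind_pmf (ps_chain rho q t x) (ps_step rho q)) = ps_chain rho q (Suc t)"
    by (rule ext) simp
  finally show ?case .
qed

lemma chain_absorb: "ps_chain rho q t (m, 0) = return_pmf (m, 0)"
  by (induction t) (simp_all add: ps_step_def bind_return_pmf)

definition Pr :: "real \<Rightarrow> real \<Rightarrow> nat \<Rightarrow> nat \<times> nat \<Rightarrow> real" where
  "Pr rho q t s = measure_pmf.prob (ps_chain rho q t s) {s. 0 < snd s}"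

lemma Pr_nonneg: "0 \<le> Pr rho q t s" by (simp add: Pr_def)
lemma Pr_le1: "Pr rho q t s \<le> 1" by (simp add: Pr_def)
lemma Pr_absorb: "Pr rho q t (m, 0) = 0" by (simp add: Pr_def chain_absorb)
lemma Pr_0: "Pr rho q 0 (m, k) = (if 0 < k then 1 else 0)" by (simp add: Pr_def)

lemma Pr_Suc_nn: "ennreal (Pr rho q (Suc t) s) = (\<integral>\<^sup>+ x. ennreal (Pr rho q t x) \<partial>ps_step rho q s)"
proof -
  have "ennreal (Pr rho q (Suc t) s) = emeasure (measure_pmf (ps_chain rho q (Suc t) s)) {s. 0 < snd s}"
    by (simp add: Pr_def measure_pmf.emeasure_eq_measure)
  also have "\<dots> = (\<integral>\<^sup>+ x. emeasure (measure_pmf (ps_chain rho q t x)) {s. 0 < snd s} \<partial>ps_step rho q s)"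
    by (simp only: chain_Suc' emeasure_bind_pmf)
  also have "\<dots> = (\<integral>\<^sup>+ x. ennreal (Pr rho q t x) \<partial>ps_step rho q s)"
    by (simp add: Pr_def measure_pmf.emeasure_eq_measure)
  finally show ?thesis .
qed

lemma STEP:
  assumes "0 < k" "0 < rho" "0 < q" "q < 1"
  shows "(\<integral>\<^sup>+ x. f x \<partial>ps_step rho q (m, k)) =
    (\<Sum>c. ennreal (q ^ c * (1 - q)) * f (m + Suc c, k)) * ennreal (rho / (1 + rho))
    + (f (m, k - 1) * ennreal (real k / real (m + k)) + f (m - 1, k) * ennreal (1 - real k / real (m + k)))
      * ennreal (1 - rho / (1 + rho))"
proof -
  have g: "(\<integral>\<^sup>+ c. f (m + c, k) \<partial>batch_pmf q) = (\<Sum>c. ennreal (q ^ c * (1 - q)) * f (m + Suc c, k))"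
    using assms unfolding batch_pmf_def
    by (simp only: nn_integral_map_pmf) (simp add: nn_integral_measure_pmf nn_integral_count_space_nat)
  have a: "0 \<le> rho / (1 + rho)" "rho / (1 + rho) \<le> 1" using assms by auto
  have b: "0 \<le> real k / real (m + k)" "real k / real (m + k) \<le> 1" using assms by auto
  show ?thesis
    using assms a b g by (simp add: ps_step_def)
qed



locale qs =
  fixes rho q :: real
  assumes rho_pos: "0 < rho" and q_pos: "0 < q" and q_lt1: "q < 1" and stab: "rho + q < 1"
begin

definition al where "al = rho / (1 + rho)"
definition ga :: "nat \<Rightarrow> nat \<Rightarrow> real" where "ga m k = real k / real (m + k)"

lemma al_bounds: "0 \<le> al" "al \<le> 1" using rho_pos by (auto simp: al_def)
lemma ga_bounds: "0 < k \<Longrightarrow> 0 \<le> ga m k" "0 < k \<Longrightarrow> ga m k \<le> 1" by (auto simp: ga_def)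

lemma STEPR:
  assumes "0 < k" "\<And>x. 0 \<le> f x" "summable (\<lambda>c. q ^ c * (1 - q) * f (m + Suc c, k))"
  shows "(\<integral>\<^sup>+ x. ennreal (f x) \<partial>ps_step rho q (m, k)) =
    ennreal ((\<Sum>c. q ^ c * (1 - q) * f (m + Suc c, k)) * al
      + (f (m, k - 1) * ga m k + f (m - 1, k) * (1 - ga m k)) * (1 - al))"
proof -
  have w: "\<And>c. 0 \<le> q ^ c * (1 - q) * f (m + Suc c, k)" using q_pos q_lt1 assms(2) by simp
  have "(\<Sum>c. ennreal (q ^ c * (1 - q)) * ennreal (f (m + Suc c, k))) = (\<Sum>c. ennreal (q ^ c * (1 - q) * f (m + Suc c, k)))"
    by (rule suminf_cong, rule ennreal_mult[symmetric]) (use q_pos q_lt1 assms(2) in auto)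
  also have "\<dots> = ennreal (\<Sum>c. q ^ c * (1 - q) * f (m + Suc c, k))"
    by (rule suminf_ennreal2[OF w assms(3)])
  finally have s: "(\<Sum>c. ennreal (q ^ c * (1 - q)) * ennreal (f (m + Suc c, k))) = ennreal (\<Sum>c. q ^ c * (1 - q) * f (m + Suc c, k))" .
  have sn: "0 \<le> (\<Sum>c. q ^ c * (1 - q) * f (m + Suc c, k))" by (rule suminf_nonneg[OF assms(3) w])
  show ?thesis
    unfolding STEP[OF assms(1) rho_pos q_pos q_lt1] s al_def[symmetric] ga_def[symmetric]
    using sn al_bounds ga_bounds[OF assms(1), of m] assms(2)
    by (simp add: ennreal_mult mult_nonneg_nonneg)
qed

lemma Pr_geo_summable: "summable (\<lambda>c. q ^ c * (1 - q) * Pr rho q t (m + Suc c, k))"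
proof (rule summable_comparison_test[where g = "\<lambda>c. q ^ c * (1 - q)"])
  show "\<exists>N. \<forall>n\<ge>N. norm (q ^ n * (1 - q) * Pr rho q t (m + Suc n, k)) \<le> q ^ n * (1 - q)"
    using q_pos q_lt1 Pr_le1 Pr_nonneg
    by (auto simp: abs_mult intro!: mult_left_le)
  show "summable (\<lambda>c. q ^ c * (1 - q))"
    using q_pos q_lt1 by (intro summable_mult2 summable_geometric) simp
qed

lemma Pr_step:
  assumes "0 < k"
  shows "Pr rho q (Suc t) (m, k) = (\<Sum>c. q ^ c * (1 - q) * Pr rho q t (m + Suc c, k)) * al
      + (Pr rho q t (m, k - 1) * ga m k + Pr rho q t (m - 1, k) * (1 - ga m k)) * (1 - al)"
proof -
  have "ennreal (Pr rho q (Suc t) (m, k)) = ennreal ((\<Sum>c. q ^ c * (1 - q) * Pr rho q t (m + Suc c, k)) * al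
      + (Pr rho q t (m, k - 1) * ga m k + Pr rho q t (m - 1, k) * (1 - ga m k)) * (1 - al))"
    unfolding Pr_Suc_nn by (rule STEPR[OF assms Pr_nonneg Pr_geo_summable])
  moreover have "0 \<le> (\<Sum>c. q ^ c * (1 - q) * Pr rho q t (m + Suc c, k)) * al
      + (Pr rho q t (m, k - 1) * ga m k + Pr rho q t (m - 1, k) * (1 - ga m k)) * (1 - al)"
    using al_bounds ga_bounds[OF assms, of m] Pr_nonneg q_pos q_lt1
    by (intro add_nonneg_nonneg mult_nonneg_nonneg suminf_nonneg Pr_geo_summable) auto
  ultimately show ?thesis using Pr_nonneg by (subst (asm) ennreal_inj) auto
qed

end


context qs begin

definition Kc where "Kc = (1 + rho) * (1 - q) / (1 - q - rho)"

lemma Kc_pos: "0 < Kc" using rho_pos q_lt1 stab by (auto simp: Kc_def)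

lemma Kc_key: "Kc * (al / (1 - q) + al - 1) = -1"
proof -
  have nz: "1 - q \<noteq> 0" "1 + rho \<noteq> 0" "1 - q - rho \<noteq> 0" using rho_pos q_lt1 stab by auto
  have h: "(al / (1 - q) + al - 1) * ((1 + rho) * (1 - q)) = -(1 - q - rho)"
  proof -
    have a1: "al / (1 - q) * ((1 + rho) * (1 - q)) = rho" using nz by (simp add: al_def)
    have a2: "al * ((1 + rho) * (1 - q)) = rho * (1 - q)" using nz by (simp add: al_def)
    have "(al / (1 - q) + al - 1) * ((1 + rho) * (1 - q)) = al / (1 - q) * ((1 + rho) * (1 - q)) + al * ((1 + rho) * (1 - q)) - (1 + rho) * (1 - q)"
      by (simp add: algebra_simps)
    also have "\<dots> = rho + rho * (1 - q) - (1 + rho) * (1 - q)" unfolding a1 a2 ..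
    also have "\<dots> = -(1 - q - rho)" by (simp add: algebra_simps)
    finally show ?thesis .
  qed
  have "Kc * (al / (1 - q) + al - 1) = ((al / (1 - q) + al - 1) * ((1 + rho) * (1 - q))) / (1 - q - rho)"
    unfolding Kc_def by (simp add: mult_ac)
  also have "\<dots> = -1" unfolding h using nz(3) by (simp add: field_simps)
  finally show ?thesis .
qed

lemma geo_lin_sums:
  "(\<lambda>c. q ^ c * (1 - q) * (Kc * (real (n + Suc c) + real b))) sums (Kc * (real n + real b + 1) + Kc * q / (1 - q))"
proof -
  have g1: "(\<lambda>c. q ^ c) sums (1 / (1 - q))" using geometric_sums[of q] q_pos q_lt1 by simp
  have g2: "(\<lambda>c. q ^ c * real c) sums (q / (1 - q)\<^sup>2)" using geometric_sums_times_n[of q] q_pos q_lt1 by simp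
  have "(\<lambda>c. ((1 - q) * Kc * (real n + real b + 1)) * q ^ c + ((1 - q) * Kc) * (q ^ c * real c)) sums
      (((1 - q) * Kc * (real n + real b + 1)) * (1 / (1 - q)) + ((1 - q) * Kc) * (q / (1 - q)\<^sup>2))"
    by (intro sums_add sums_mult g1 g2)
  moreover have "(\<lambda>c. ((1 - q) * Kc * (real n + real b + 1)) * q ^ c + ((1 - q) * Kc) * (q ^ c * real c))
      = (\<lambda>c. q ^ c * (1 - q) * (Kc * (real (n + Suc c) + real b)))"
    by (auto simp: fun_eq_iff algebra_simps)
  moreover have "((1 - q) * Kc * (real n + real b + 1)) * (1 / (1 - q)) + ((1 - q) * Kc) * (q / (1 - q)\<^sup>2)
      = Kc * (real n + real b + 1) + Kc * q / (1 - q)"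
  proof -
    have nz: "1 - q \<noteq> 0" using q_lt1 by simp
    have "((1 - q) * Kc) * (q / (1 - q)\<^sup>2) = Kc * q / (1 - q)"
      using nz by (simp add: power2_eq_square)
    moreover have "((1 - q) * Kc * (real n + real b + 1)) * (1 / (1 - q)) = Kc * (real n + real b + 1)"
      using nz by simp
    ultimately show ?thesis by simp
  qed
  ultimately show ?thesis by simp
qed

lemma psum_bound: "(\<Sum>t<N. Pr rho q t (n, b)) \<le> Kc * (real n + real b)"
proof (induction N arbitrary: n b)
  case 0
  then show ?case using Kc_pos by simp
next
  case (Suc N)
  show ?case
  proof (cases "b = 0")
    case True
    then show ?thesis using Kc_pos by (simp add: Pr_absorb)
  next
    case False
    then have b0: "0 < b" by simp
    define S where "S = (\<lambda>s. \<Sum>t<N. Pr rho q t s)"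
    have S_nn: "0 \<le> S s" for s unfolding S_def by (intro sum_nonneg Pr_nonneg)
    have IH: "S (m, k) \<le> Kc * (real m + real k)" for m k unfolding S_def by (rule Suc.IH)
    have sm: "summable (\<lambda>c. q ^ c * (1 - q) * Pr rho q t (n + Suc c, b))" for t by (rule Pr_geo_summable)
    have e1: "(\<Sum>t<Suc N. Pr rho q t (n, b)) = 1 + (\<Sum>t<N. Pr rho q (Suc t) (n, b))"
      by (simp only: sum.lessThan_Suc_shift) (simp add: Pr_0 b0)
    have e2: "(\<Sum>t<N. Pr rho q (Suc t) (n, b)) =
        (\<Sum>c. q ^ c * (1 - q) * S (n + Suc c, b)) * al
        + (S (n, b - 1) * ga n b + S (n - 1, b) * (1 - ga n b)) * (1 - al)"
    proof -
      have "(\<Sum>t<N. Pr rho q (Suc t) (n, b)) = (\<Sum>t<N. (\<Sum>c. q ^ c * (1 - q) * Pr rho q t (n + Suc c, b)) * al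
        + (Pr rho q t (n, b - 1) * ga n b + Pr rho q t (n - 1, b) * (1 - ga n b)) * (1 - al))"
        using b0 by (simp add: Pr_step)
      also have "\<dots> = (\<Sum>t<N. \<Sum>c. q ^ c * (1 - q) * Pr rho q t (n + Suc c, b)) * al
        + ((\<Sum>t<N. Pr rho q t (n, b - 1)) * ga n b + (\<Sum>t<N. Pr rho q t (n - 1, b)) * (1 - ga n b)) * (1 - al)"
        by (simp only: sum.distrib sum_distrib_right[symmetric])
      also have "(\<Sum>t<N. \<Sum>c. q ^ c * (1 - q) * Pr rho q t (n + Suc c, b)) = (\<Sum>c. \<Sum>t<N. q ^ c * (1 - q) * Pr rho q t (n + Suc c, b))"
        by (rule suminf_sum[symmetric]) (rule sm)
      also have "\<dots> = (\<Sum>c. q ^ c * (1 - q) * S (n + Suc c, b))"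
        by (simp add: S_def sum_distrib_left)
      finally show ?thesis by (simp add: S_def)
    qed
    have gsum: "summable (\<lambda>c. q ^ c * (1 - q) * (Kc * (real (n + Suc c) + real b)))"
      using geo_lin_sums by (rule sums_summable)
    have le1: "(\<Sum>c. q ^ c * (1 - q) * S (n + Suc c, b)) \<le> Kc * (real n + real b + 1) + Kc * q / (1 - q)"
    proof -
      have pw: "q ^ c * (1 - q) * S (n + Suc c, b) \<le> q ^ c * (1 - q) * (Kc * (real (n + Suc c) + real b))" for c
      proof -
        have "S (n + Suc c, b) \<le> Kc * (real (n + Suc c) + real b)" by (rule IH)
        then show ?thesis by (rule mult_left_mono) (use q_pos q_lt1 in simp)
      qed
      have sm1: "summable (\<lambda>c. q ^ c * (1 - q) * S (n + Suc c, b))"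
        by (rule summable_comparison_test[OF _ gsum]) (use pw S_nn q_pos q_lt1 in auto)
      have "(\<Sum>c. q ^ c * (1 - q) * S (n + Suc c, b)) \<le> (\<Sum>c. q ^ c * (1 - q) * (Kc * (real (n + Suc c) + real b)))"
        by (rule suminf_le[OF pw sm1 gsum])
      also have "\<dots> = Kc * (real n + real b + 1) + Kc * q / (1 - q)"
        using geo_lin_sums by (rule sums_unique[symmetric])
      finally show ?thesis .
    qed
    have le2: "S (n, b - 1) * ga n b + S (n - 1, b) * (1 - ga n b) \<le> Kc * (real n + real b - 1)"
    proof (cases "n = 0")
      case True
      then show ?thesis using IH[of 0 "b - 1"] b0 by (simp add: ga_def of_nat_diff)
    next
      case False
      have a: "S (n, b - 1) \<le> Kc * (real n + real b - 1)" using IH[of n "b - 1"] b0 by (simp add: of_nat_diff algebra_simps)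
      have c: "S (n - 1, b) \<le> Kc * (real n + real b - 1)" using IH[of "n - 1" b] False by (simp add: of_nat_diff algebra_simps)
      have "S (n, b - 1) * ga n b + S (n - 1, b) * (1 - ga n b)
          \<le> Kc * (real n + real b - 1) * ga n b + Kc * (real n + real b - 1) * (1 - ga n b)"
        using ga_bounds[OF b0, of n] by (intro add_mono mult_right_mono a c) auto
      then show ?thesis by (simp add: algebra_simps)
    qed
    have "(\<Sum>t<Suc N. Pr rho q t (n, b)) \<le> 1 + ((Kc * (real n + real b + 1) + Kc * q / (1 - q)) * al
        + Kc * (real n + real b - 1) * (1 - al))"
      unfolding e1 e2 using al_bounds
      by (intro add_mono mult_right_mono le1 le2 order_refl) auto
    also have "\<dots> = Kc * (real n + real b) + (1 + Kc * (al / (1 - q) + al - 1))"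
      using q_lt1 by (simp add: field_simps)
    also have "\<dots> = Kc * (real n + real b)" by (simp add: Kc_key)
    finally show ?thesis .
  qed
qed

lemma Pr_summable: "summable (\<lambda>t. Pr rho q t s)"
proof (cases s)
  case (Pair n b)
  show ?thesis unfolding Pair
    by (rule summableI_nonneg_bounded[where x = "Kc * (real n + real b)"]) (use Pr_nonneg psum_bound in auto)
qed

lemma Pr_suminf_bound: "(\<Sum>t. Pr rho q t (n, b)) \<le> Kc * (real n + real b)"
  by (rule suminf_le_const[OF Pr_summable psum_bound])

lemma Pr_suminf_nonneg: "0 \<le> (\<Sum>t. Pr rho q t s)"
  by (rule suminf_nonneg[OF Pr_summable Pr_nonneg])

end


context qs begin

definition V where "V s = (\<Sum>t. Pr rho q t s)"

lemma V_nonneg: "0 \<le> V s" unfolding V_def by (rule Pr_suminf_nonneg)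
lemma V_bound: "V (n, b) \<le> Kc * (real n + real b)" unfolding V_def by (rule Pr_suminf_bound)
lemma V_absorb: "V (n, 0) = 0" unfolding V_def by (simp add: Pr_absorb)

lemma V_geo_summable: "summable (\<lambda>c. q ^ c * (1 - q) * V (m + Suc c, k))"
proof (rule summable_comparison_test[OF _ sums_summable[OF geo_lin_sums[of m k]]])
  show "\<exists>N. \<forall>n\<ge>N. norm (q ^ n * (1 - q) * V (m + Suc n, k)) \<le> q ^ n * (1 - q) * (Kc * (real (m + Suc n) + real k))"
  proof (intro exI allI impI)
    fix n :: nat
    have "V (m + Suc n, k) \<le> Kc * (real (m + Suc n) + real k)" by (rule V_bound)
    then show "norm (q ^ n * (1 - q) * V (m + Suc n, k)) \<le> q ^ n * (1 - q) * (Kc * (real (m + Suc n) + real k))"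
      using q_pos q_lt1 V_nonneg by (simp add: abs_mult mult_left_mono)
  qed
qed

lemma V_rec:
  assumes "0 < b"
  shows "V (n, b) = 1 + ((\<Sum>c. q ^ c * (1 - q) * V (n + Suc c, b)) * al
      + (V (n, b - 1) * ga n b + V (n - 1, b) * (1 - ga n b)) * (1 - al))"
proof -
  define R where "R = (\<Sum>c. q ^ c * (1 - q) * V (n + Suc c, b)) * al
      + (V (n, b - 1) * ga n b + V (n - 1, b) * (1 - ga n b)) * (1 - al)"
  have sS: "summable (\<lambda>t. Pr rho q (Suc t) (n, b))"
    using Pr_summable by (subst summable_Suc_iff)
  have "ennreal (\<Sum>t. Pr rho q (Suc t) (n, b)) = (\<Sum>t. ennreal (Pr rho q (Suc t) (n, b)))"
    by (rule suminf_ennreal2[symmetric]) (use Pr_nonneg sS in auto)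
  also have "\<dots> = (\<Sum>t. \<integral>\<^sup>+ x. ennreal (Pr rho q t x) \<partial>ps_step rho q (n, b))"
    by (simp only: Pr_Suc_nn)
  also have "\<dots> = (\<integral>\<^sup>+ x. (\<Sum>t. ennreal (Pr rho q t x)) \<partial>ps_step rho q (n, b))"
    by (rule nn_integral_suminf[symmetric]) simp
  also have "\<dots> = (\<integral>\<^sup>+ x. ennreal (V x) \<partial>ps_step rho q (n, b))"
    unfolding V_def by (intro nn_integral_cong suminf_ennreal2) (use Pr_nonneg Pr_summable in auto)
  also have "\<dots> = ennreal R"
    unfolding R_def by (rule STEPR[OF assms V_nonneg V_geo_summable])
  finally have e: "ennreal (\<Sum>t. Pr rho q (Suc t) (n, b)) = ennreal R" .
  have R_nn: "0 \<le> R"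
    unfolding R_def using al_bounds ga_bounds[OF assms, of n] V_nonneg q_pos q_lt1
    by (intro add_nonneg_nonneg mult_nonneg_nonneg suminf_nonneg V_geo_summable) auto
  have s_nn: "0 \<le> (\<Sum>t. Pr rho q (Suc t) (n, b))"
    by (rule suminf_nonneg[OF sS Pr_nonneg])
  have "(\<Sum>t. Pr rho q (Suc t) (n, b)) = R" using e R_nn s_nn by (subst (asm) ennreal_inj) auto
  moreover have "(\<Sum>t. Pr rho q (Suc t) (n, b)) = V (n, b) - 1"
    unfolding V_def using suminf_split_head[OF Pr_summable[of "(n, b)"]] assms by (simp add: Pr_0)
  ultimately show ?thesis unfolding R_def by simp
qed

definition T where "T n b = mean_sojourn rho q n b"

lemma T_V: "T n b = V (n, b) / (1 + rho)"
  unfolding T_def mean_sojourn_def V_def Pr_def[symmetric]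
  using Pr_summable by (simp add: suminf_divide)

lemma T_nonneg: "0 \<le> T n b" using V_nonneg rho_pos by (simp add: T_V)
lemma T_bound: "T n b \<le> Kc / (1 + rho) * (real n + real b)"
  using V_bound[of n b] rho_pos by (simp add: T_V divide_right_mono)
lemma T_absorb: "T n 0 = 0" by (simp add: T_V V_absorb)

definition A where "A n b = (\<Sum>c. q ^ c * T (n + Suc c) b)"

lemma A_summable: "summable (\<lambda>c. q ^ c * T (n + Suc c) b)"
proof -
  have "summable (\<lambda>c. (q ^ c * (1 - q) * V (n + Suc c, b)) * (1 / ((1 - q) * (1 + rho))))"
    by (intro summable_mult2 V_geo_summable)
  moreover have "(\<lambda>c. (q ^ c * (1 - q) * V (n + Suc c, b)) * (1 / ((1 - q) * (1 + rho)))) = (\<lambda>c. q ^ c * T (n + Suc c) b)"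
    using q_lt1 rho_pos by (auto simp: fun_eq_iff T_V)
  ultimately show ?thesis by simp
qed

lemma A_sums: "(\<lambda>c. q ^ c * T (n + Suc c) b) sums A n b"
  unfolding A_def using A_summable by (rule summable_sums)

lemma A_nonneg: "0 \<le> A n b"
  unfolding A_def by (rule suminf_nonneg[OF A_summable]) (use q_pos T_nonneg in simp)

lemma A_shift: "A n b = T (Suc n) b + q * A (Suc n) b"
proof -
  have "A n b = (\<Sum>c. q ^ Suc c * T (n + Suc (Suc c)) b) + q ^ 0 * T (n + Suc 0) b"
    unfolding A_def using suminf_split_head[OF A_summable[of n b]] by simp
  also have "(\<Sum>c. q ^ Suc c * T (n + Suc (Suc c)) b) = q * A (Suc n) b"
    unfolding A_def using suminf_mult[OF A_summable[of "Suc n" b], of q] by (simp add: mult_ac)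
  finally show ?thesis by simp
qed

lemma A_bound: "A n b \<le> (Kc * (real n + real b + 1) + Kc * q / (1 - q)) * (1 / ((1 - q) * (1 + rho)))"
proof -
  have aux: "(x * (1 - q) * y) * (1 / ((1 - q) * (1 + rho))) = x * (y / (1 + rho))" for x y
  proof -
    have nz: "1 - q \<noteq> 0" using q_lt1 by auto
    have "(x * (1 - q) * y) * (1 / ((1 - q) * (1 + rho))) = x * y * ((1 - q) / ((1 - q) * (1 + rho)))"
      by (simp add: mult_ac)
    also have "(1 - q) / ((1 - q) * (1 + rho)) = 1 / (1 + rho)" using nz by simp
    finally show ?thesis by simp
  qed
  have le: "q ^ c * T (n + Suc c) b \<le> (q ^ c * (1 - q) * (Kc * (real (n + Suc c) + real b))) * (1 / ((1 - q) * (1 + rho)))" for c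
  proof -
    have "T (n + Suc c) b \<le> Kc * (real (n + Suc c) + real b) / (1 + rho)" using T_bound[of "n + Suc c" b] by simp
    then have "q ^ c * T (n + Suc c) b \<le> q ^ c * (Kc * (real (n + Suc c) + real b) / (1 + rho))"
      using q_pos by (intro mult_left_mono) auto
    then show ?thesis unfolding aux .
  qed
  have "A n b \<le> (\<Sum>c. (q ^ c * (1 - q) * (Kc * (real (n + Suc c) + real b))) * (1 / ((1 - q) * (1 + rho))))"
    unfolding A_def by (rule suminf_le[OF le A_summable]) (intro summable_mult2 sums_summable[OF geo_lin_sums])
  also have "\<dots> = (Kc * (real n + real b + 1) + Kc * q / (1 - q)) * (1 / ((1 - q) * (1 + rho)))"
    by (rule sums_unique[symmetric], rule sums_mult2[OF geo_lin_sums])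
  finally show ?thesis .
qed

lemma T_rec:
  assumes "0 < b"
  shows "(1 + rho) * T n b = 1 + rho * (1 - q) * A n b + (real b * T n (b - 1) + real n * T (n - 1) b) / (real n + real b)"
proof -
  have V: "V (m, k) = (1 + rho) * T m k" for m k using rho_pos by (simp add: T_V)
  have f: "(\<lambda>c. q ^ c * (1 - q) * V (n + Suc c, b)) = (\<lambda>c. ((1 - q) * (1 + rho)) * (q ^ c * T (n + Suc c) b))"
    by (simp add: V fun_eq_iff mult_ac)
  have sA: "(\<Sum>c. q ^ c * (1 - q) * V (n + Suc c, b)) = (1 - q) * (1 + rho) * A n b"
    unfolding f A_def by (rule suminf_mult[OF A_summable])
  have h: "(1 + rho) * T n b = 1 + ((1 - q) * (1 + rho) * A n b * al
      + ((1 + rho) * T n (b - 1) * ga n b + (1 + rho) * T (n - 1) b * (1 - ga n b)) * (1 - al))"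
    using V_rec[OF assms, of n, unfolded sA] unfolding V .
  have al1: "(1 + rho) * al = rho" using rho_pos by (simp add: al_def)
  have al2: "(1 + rho) * (1 - al) = 1"
  proof -
    have "(1 + rho) * (1 - al) = (1 + rho) - (1 + rho) * al" by (simp add: algebra_simps)
    then show ?thesis using al1 by simp
  qed
  have e1: "(1 - q) * (1 + rho) * A n b * al = rho * (1 - q) * A n b"
  proof -
    have "(1 - q) * (1 + rho) * A n b * al = (1 - q) * A n b * ((1 + rho) * al)" by (simp add: mult_ac)
    then show ?thesis unfolding al1 by (simp add: mult_ac)
  qed
  have e2: "((1 + rho) * T n (b - 1) * ga n b + (1 + rho) * T (n - 1) b * (1 - ga n b)) * (1 - al)
      = (T n (b - 1) * ga n b + T (n - 1) b * (1 - ga n b)) * ((1 + rho) * (1 - al))"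
    by (simp add: algebra_simps)
  have nb: "real n + real b \<noteq> 0" using assms by simp
  have g1: "ga n b = real b / (real n + real b)" by (simp add: ga_def)
  have g2: "1 - ga n b = real n / (real n + real b)"
    using nb unfolding g1 by (simp add: field_simps)
  have e3: "T n (b - 1) * ga n b + T (n - 1) b * (1 - ga n b) = (real b * T n (b - 1) + real n * T (n - 1) b) / (real n + real b)"
    unfolding g2 unfolding g1 by (simp add: add_divide_distrib mult_ac)
  show ?thesis using h unfolding e1 e2 al2 e3 by simp
qed

end


definition cx :: "(nat \<times> nat \<Rightarrow> real) \<Rightarrow> nat \<times> nat \<Rightarrow> complex" where
  "cx f = (\<lambda>x. complex_of_real (f x))"

definition su :: "(nat \<times> nat \<Rightarrow> real) \<Rightarrow> nat \<times> nat \<Rightarrow> real" where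
  "su f = (\<lambda>(j,b). if j = 0 then 0 else f (j - 1, b))"
definition sv :: "(nat \<times> nat \<Rightarrow> real) \<Rightarrow> nat \<times> nat \<Rightarrow> real" where
  "sv f = (\<lambda>(j,b). if b = 0 then 0 else f (j, b - 1))"

definition HSr :: "complex \<Rightarrow> complex \<Rightarrow> (nat \<times> nat \<Rightarrow> real) \<Rightarrow> complex \<Rightarrow> bool" where
  "HSr u v f X \<longleftrightarrow> ((\<lambda>(j,b). complex_of_real (f (j,b)) * u ^ j * v ^ b) has_sum X) UNIV"

lemma HSr_add: assumes "HSr u v f X" "HSr u v g Y" shows "HSr u v (\<lambda>x. f x + g x) (X + Y)"
proof -
  have "((\<lambda>x. (\<lambda>(j,b). complex_of_real (f (j,b)) * u ^ j * v ^ b) x + (\<lambda>(j,b). complex_of_real (g (j,b)) * u ^ j * v ^ b) x) has_sum (X + Y)) UNIV"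
    by (rule has_sum_add) (use assms in \<open>simp_all add: HSr_def\<close>)
  moreover have "(\<lambda>x. (\<lambda>(j,b). complex_of_real (f (j,b)) * u ^ j * v ^ b) x + (\<lambda>(j,b). complex_of_real (g (j,b)) * u ^ j * v ^ b) x)
      = (\<lambda>(j,b). complex_of_real ((\<lambda>x. f x + g x) (j,b)) * u ^ j * v ^ b)"
    by (auto simp: fun_eq_iff algebra_simps)
  ultimately show ?thesis unfolding HSr_def by simp
qed

lemma HSr_cmult: assumes "HSr u v f X" shows "HSr u v (\<lambda>x. r * f x) (complex_of_real r * X)"
proof -
  have "((\<lambda>x. complex_of_real r * (\<lambda>(j,b). complex_of_real (f (j,b)) * u ^ j * v ^ b) x) has_sum (complex_of_real r * X)) UNIV"
    by (rule has_sum_cmult_right) (use assms in \<open>simp_all add: HSr_def\<close>)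
  moreover have "(\<lambda>x. complex_of_real r * (\<lambda>(j,b). complex_of_real (f (j,b)) * u ^ j * v ^ b) x)
      = (\<lambda>(j,b). complex_of_real ((\<lambda>x. r * f x) (j,b)) * u ^ j * v ^ b)"
    by (auto simp: fun_eq_iff algebra_simps)
  ultimately show ?thesis unfolding HSr_def by simp
qed

lemma HSr_su: assumes "HSr u v f X" shows "HSr u v (su f) (u * X)"
proof -
  define g where "g = (\<lambda>(j,b). complex_of_real (su f (j,b)) * u ^ j * v ^ b)"
  define h where "h = (\<lambda>(j::nat,b::nat). (Suc j, b))"
  have "((\<lambda>x. u * (\<lambda>(j,b). complex_of_real (f (j,b)) * u ^ j * v ^ b) x) has_sum (u * X)) UNIV"
    by (rule has_sum_cmult_right) (use assms in \<open>simp add: HSr_def\<close>)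
  moreover have "(\<lambda>x. u * (\<lambda>(j,b). complex_of_real (f (j,b)) * u ^ j * v ^ b) x) = g \<circ> h"
    by (auto simp: fun_eq_iff g_def h_def su_def mult_ac)
  ultimately have "((g \<circ> h) has_sum (u * X)) UNIV" by simp
  then have "(g has_sum (u * X)) (h ` UNIV)"
    by (subst has_sum_reindex) (auto simp: inj_on_def h_def)
  then have "(g has_sum (u * X)) UNIV"
  proof (subst (asm) has_sum_cong_neutral[where T = UNIV and g = g])
    fix x assume "x \<in> UNIV - h ` UNIV"
    then obtain b where "x = (0, b)"
      by (cases x) (metis (no_types, lifting) DiffE h_def old.nat.exhaust rangeI split_conv)
    then show "g x = 0" by (simp add: g_def su_def)
  qed auto
  then show ?thesis unfolding HSr_def g_def .
qed

lemma HSr_sv: assumes "HSr u v f X" shows "HSr u v (sv f) (v * X)"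
proof -
  define g where "g = (\<lambda>(j,b). complex_of_real (sv f (j,b)) * u ^ j * v ^ b)"
  define h where "h = (\<lambda>(j::nat,b::nat). (j, Suc b))"
  have "((\<lambda>x. v * (\<lambda>(j,b). complex_of_real (f (j,b)) * u ^ j * v ^ b) x) has_sum (v * X)) UNIV"
    by (rule has_sum_cmult_right) (use assms in \<open>simp add: HSr_def\<close>)
  moreover have "(\<lambda>x. v * (\<lambda>(j,b). complex_of_real (f (j,b)) * u ^ j * v ^ b) x) = g \<circ> h"
    by (auto simp: fun_eq_iff g_def h_def sv_def mult_ac)
  ultimately have "((g \<circ> h) has_sum (v * X)) UNIV" by simp
  then have "(g has_sum (v * X)) (h ` UNIV)"
    by (subst has_sum_reindex) (auto simp: inj_on_def h_def)
  then have "(g has_sum (v * X)) UNIV"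
  proof (subst (asm) has_sum_cong_neutral[where T = UNIV and g = g])
    fix x assume "x \<in> UNIV - h ` UNIV"
    then obtain j where "x = (j, 0)"
      by (cases x) (metis (no_types, lifting) DiffE h_def old.nat.exhaust rangeI split_conv)
    then show "g x = 0" by (simp add: g_def sv_def)
  qed auto
  then show ?thesis unfolding HSr_def g_def .
qed

lemma HSr_zero: assumes "HSr u v f X" "\<And>x. f x = 0" shows "X = 0"
proof -
  have "(\<lambda>(j,b). complex_of_real (f (j,b)) * u ^ j * v ^ b) = (\<lambda>_. 0)"
    using assms(2) by (auto simp: fun_eq_iff)
  then have "((\<lambda>(j,b). complex_of_real (f (j,b)) * u ^ j * v ^ b) has_sum 0) UNIV"
    by simp
  then show ?thesis using assms(1) unfolding HSr_def using has_sum_unique by blast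
qed

lemma HSr_PS2: "pb (cx f) \<Longrightarrow> norm u < 1 \<Longrightarrow> norm v < 1 \<Longrightarrow> HSr u v f (PS2 (cx f) u v)"
  unfolding HSr_def using PS2_has_sum[of "cx f" u v] by (simp add: cx_def)

lemma HSr_cong: "HSr u v f X \<Longrightarrow> f = g \<Longrightarrow> X = Y \<Longrightarrow> HSr u v g Y" by simp



context qs begin

definition tT where "tT = (\<lambda>(j,b). T j b)"
definition tA where "tA = (\<lambda>(j,b). A j b)"
definition tE where "tE = (\<lambda>(j,b). if j = 0 then T 0 b + q * A 0 b else 0)"
definition tL where "tL = (\<lambda>(j::nat,b::nat). if b = 0 then 0 else - (real j + real b))"
definition aj where "aj = (\<lambda>(j,b). real j * A j b)"
definition ab where "ab = (\<lambda>(j,b). real b * A j b)"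
definition eb where "eb = (\<lambda>(j,b). real b * tE (j,b))"

definition Ctot where "Ctot = (\<lambda>x. (-(rho+q)) * aj x + ((1+rho+q) * su aj x + ((-1) * su (su aj) x + ((-(rho+q)) * ab x + ((1+rho) * su ab x + (q * sv ab x + ((-1) * su (sv ab) x + ((-2) * su (su tA) x + ((1+rho+q) * su tA x + ((-1) * su (sv tA) x + (q * sv tA x + (1 * tL x + ((-1) * su tE x + ((-1) * sv tE x + ((1+rho) * eb x + (-1) * sv eb x)))))))))))))))"

lemma A_absorb: "A n 0 = 0" by (simp add: A_def T_absorb)

lemma Ctot_zero: "Ctot x = 0"
proof (cases x)
  case (Pair j b)
  show ?thesis
  proof (cases b)
    case 0
    then show ?thesis unfolding Pair
      by (simp add: Ctot_def aj_def ab_def eb_def tE_def tL_def tA_def su_def sv_def A_absorb T_absorb)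
  next
    case (Suc k)
    have R: "(1 + rho) * T j b = 1 + rho * (1 - q) * A j b + (real b * T j (b - 1) + real j * T (j - 1) b) / (real j + real b)"
      by (rule T_rec) (simp add: Suc)
    have nz: "real j + real b \<noteq> 0" using Suc by simp
    have R': "(real j + real b) * (1 + rho) * T j b = (real j + real b) * (1 + rho * (1 - q) * A j b) + (real b * T j (b - 1) + real j * T (j - 1) b)"
    proof -
      have "(real j + real b) * ((1 + rho) * T j b) = (real j + real b) * (1 + rho * (1 - q) * A j b) + (real j + real b) * ((real b * T j (b - 1) + real j * T (j - 1) b) / (real j + real b))"
        unfolding R by (simp add: algebra_simps)
      also have "(real j + real b) * ((real b * T j (b - 1) + real j * T (j - 1) b) / (real j + real b)) = real b * T j (b - 1) + real j * T (j - 1) b"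
        using nz by simp
      finally show ?thesis by (simp add: mult_ac)
    qed
    show ?thesis
    proof (cases j)
      case 0
      have s1: "A 0 k = T 1 k + q * A 1 k" using A_shift[of 0 k] by simp
      show ?thesis using R' unfolding Pair \<open>j = 0\<close> Suc
        by (simp add: Ctot_def aj_def ab_def eb_def tE_def tL_def tA_def su_def sv_def) algebra
    next
      case (Suc i)
      note ji = Suc
      show ?thesis
      proof (cases i)
        case 0
        have s1: "A 0 b = T 1 b + q * A 1 b" using A_shift[of 0 b] by simp
        have s2: "A 0 k = T 1 k + q * A 1 k" using A_shift[of 0 k] by simp
        show ?thesis using R' s1 s2 unfolding Pair ji \<open>i = 0\<close> \<open>b = Suc k\<close>
          by (simp add: Ctot_def aj_def ab_def eb_def tE_def tL_def tA_def su_def sv_def) algebra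
      next
        case (Suc i')
        have s1: "A (Suc i') b = T j b + q * A j b" using A_shift[of "Suc i'" b] ji Suc by simp
        have s2: "A i' b = T (Suc i') b + q * A (Suc i') b" using A_shift[of i' b] by simp
        have s3: "A (Suc i') k = T j k + q * A j k" using A_shift[of "Suc i'" k] ji Suc by simp
        show ?thesis using R' s1 s2 s3 unfolding Pair ji \<open>i = Suc i'\<close> \<open>b = Suc k\<close>
          by (simp add: Ctot_def aj_def ab_def eb_def tE_def tL_def tA_def su_def sv_def) algebra
      qed
    qed
  qed
qed

end


lemma pb_dcoef_u: "pb c \<Longrightarrow> pb (\<lambda>(j,b). of_nat (Suc j) * c (Suc j, b))"
proof -
  assume "pb c"
  then have "pb (\<lambda>(j,b). (\<lambda>(j,b). of_nat j * c (j,b)) (Suc j, b))" by blast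
  then show ?thesis by (rule pb_mono) auto
qed

lemma pb_dcoef_v: "pb c \<Longrightarrow> pb (\<lambda>(j,b). of_nat (Suc b) * c (j, Suc b))"
proof -
  assume "pb c"
  then have "pb (\<lambda>(j,b). (\<lambda>(j,b). of_nat b * c (j,b)) (j, Suc b))" by blast
  then show ?thesis by (rule pb_mono) auto
qed

lemma deriv_u_mult:
  assumes "pb c" "norm u < 1" "norm v < 1"
  shows "((\<lambda>w. PS2 c w v) has_field_derivative PS2 (\<lambda>(j,b). of_nat (Suc j) * c (Suc j, b)) u v) (at u)"
    and "u * PS2 (\<lambda>(j,b). of_nat (Suc j) * c (Suc j, b)) u v = PS2 (\<lambda>(j,b). of_nat j * c (j,b)) u v"
proof -
  show "((\<lambda>w. PS2 c w v) has_field_derivative PS2 (\<lambda>(j,b). of_nat (Suc j) * c (Suc j, b)) u v) (at u)"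
    by (rule PS2_deriv_u[OF assms])
  have "u * PS2 (\<lambda>(j,b). of_nat (Suc j) * c (Suc j, b)) u v
      = PS2 (\<lambda>(j,b). if j = 0 then 0 else (\<lambda>(j,b). of_nat (Suc j) * c (Suc j, b)) (j - 1, b)) u v"
    by (rule PS2_shiftu[symmetric, OF pb_dcoef_u[OF assms(1)] assms(2,3)])
  also have "(\<lambda>(j,b). if j = 0 then 0 else (\<lambda>(j,b). of_nat (Suc j) * c (Suc j, b)) (j - 1, b)) = (\<lambda>(j,b). of_nat j * c (j,b))"
    by (auto simp: fun_eq_iff)
  finally show "u * PS2 (\<lambda>(j,b). of_nat (Suc j) * c (Suc j, b)) u v = PS2 (\<lambda>(j,b). of_nat j * c (j,b)) u v" .
qed

lemma deriv_v_mult: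
  assumes "pb c" "norm u < 1" "norm v < 1"
  shows "((\<lambda>w. PS2 c u w) has_field_derivative PS2 (\<lambda>(j,b). of_nat (Suc b) * c (j, Suc b)) u v) (at v)"
    and "v * PS2 (\<lambda>(j,b). of_nat (Suc b) * c (j, Suc b)) u v = PS2 (\<lambda>(j,b). of_nat b * c (j,b)) u v"
proof -
  show "((\<lambda>w. PS2 c u w) has_field_derivative PS2 (\<lambda>(j,b). of_nat (Suc b) * c (j, Suc b)) u v) (at v)"
    by (rule PS2_deriv_v[OF assms])
  have "v * PS2 (\<lambda>(j,b). of_nat (Suc b) * c (j, Suc b)) u v
      = PS2 (\<lambda>(j,b). if b = 0 then 0 else (\<lambda>(j,b). of_nat (Suc b) * c (j, Suc b)) (j, b - 1)) u v"
    by (rule PS2_shiftv[symmetric, OF pb_dcoef_v[OF assms(1)] assms(2,3)])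
  also have "(\<lambda>(j,b). if b = 0 then 0 else (\<lambda>(j,b). of_nat (Suc b) * c (j, Suc b)) (j, b - 1)) = (\<lambda>(j,b). of_nat b * c (j,b))"
    by (auto simp: fun_eq_iff)
  finally show "v * PS2 (\<lambda>(j,b). of_nat (Suc b) * c (j, Suc b)) u v = PS2 (\<lambda>(j,b). of_nat b * c (j,b)) u v" .
qed

lemma pb_inner_summable:
  assumes "pb c" "norm v < 1"
  shows "(\<lambda>b. c (j,b) * v ^ b) summable_on UNIV"
proof -
  obtain M k where M: "M \<ge> 0" "\<And>j b. norm (c (j,b)) \<le> M * ((real j + 1) * (real b + 1)) ^ k"
    using assms(1) unfolding pb_def by blast
  have sm: "(\<lambda>b. (M * (real j + 1) ^ k) * ((real b + 1) ^ k * norm v ^ b)) summable_on UNIV"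
    by (rule summable_on_cmult_right, rule summable_on_poly_geom) (use assms in auto)
  have "(\<lambda>b. norm (c (j,b) * v ^ b)) summable_on UNIV"
  proof (rule Infinite_Sum.abs_summable_on_comparison_test'[OF sm])
    fix b :: nat assume "b \<in> UNIV"
    have "norm (c (j,b) * v ^ b) = norm (c (j,b)) * norm v ^ b" by (simp add: norm_mult norm_power)
    also have "\<dots> \<le> M * ((real j + 1) * (real b + 1)) ^ k * norm v ^ b"
      by (intro mult_right_mono M) auto
    finally show "norm (c (j,b) * v ^ b) \<le> (M * (real j + 1) ^ k) * ((real b + 1) ^ k * norm v ^ b)"
      by (simp add: power_mult_distrib mult_ac)
  qed
  then show ?thesis by (rule abs_summable_summable)
qed

lemma HSr_unique: "HSr u v f X \<Longrightarrow> HSr u v f Y \<Longrightarrow> X = Y"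
  unfolding HSr_def using has_sum_unique by blast

lemma L10_sums:
  fixes u v :: complex
  assumes "norm u < 1" "norm v < 1"
  shows "(\<lambda>b. k1 (Suc b) u * v ^ Suc b) sums L10 u v"
proof -
  have u1: "1 - u \<noteq> 0" and v1: "1 - v \<noteq> 0" using assms by (auto simp: right_minus_eq dest!: sym[of 1])
  have g1: "(\<lambda>b. v ^ Suc b) sums (v / (1 - v))"
    using sums_mult[OF geometric_sums[OF assms(2)], of v] by (simp add: field_simps)
  have g2: "(\<lambda>b. of_nat (Suc b) * v ^ Suc b) sums (v / (1 - v)\<^sup>2)"
  proof -
    have "(\<lambda>n. v ^ n * of_nat n) sums (v / (1 - v)\<^sup>2)" by (rule geometric_sums_times_n[OF assms(2)])
    then have "(\<lambda>n. v ^ n * of_nat n) sums (v / (1 - v)\<^sup>2 + v ^ 0 * of_nat 0)" by simp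
    then have "(\<lambda>n. v ^ Suc n * of_nat (Suc n)) sums (v / (1 - v)\<^sup>2)"
      by (rule sums_Suc_iff[where f = "\<lambda>n. v ^ n * of_nat n", THEN iffD2])
    then show ?thesis by (simp add: mult_ac)
  qed
  have "(\<lambda>b. (- u / (1 - u)\<^sup>2) * v ^ Suc b - (1 / (1 - u)) * (of_nat (Suc b) * v ^ Suc b)) sums
      ((- u / (1 - u)\<^sup>2) * (v / (1 - v)) - (1 / (1 - u)) * (v / (1 - v)\<^sup>2))"
    by (intro sums_diff sums_mult g1 g2)
  moreover have "(\<lambda>b. (- u / (1 - u)\<^sup>2) * v ^ Suc b - (1 / (1 - u)) * (of_nat (Suc b) * v ^ Suc b)) = (\<lambda>b. k1 (Suc b) u * v ^ Suc b)"
    by (auto simp: fun_eq_iff k1_def algebra_simps add_divide_distrib)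
  moreover have "(- u / (1 - u)\<^sup>2) * (v / (1 - v)) - (1 / (1 - u)) * (v / (1 - v)\<^sup>2) = L10 u v"
  proof -
    define a where "a = 1 - u"
    define c where "c = 1 - v"
    have a0: "a \<noteq> 0" and c0: "c \<noteq> 0" using u1 v1 by (auto simp: a_def c_def)
    have uu: "u = 1 - a" and vv: "v = 1 - c" by (auto simp: a_def c_def)
    show ?thesis unfolding L10_def uu vv using a0 c0
      by (simp add: field_simps power2_eq_square)
  qed
  ultimately show ?thesis by simp
qed



context qs begin

lemma jb_le: "real j + real b \<le> (real j + 1) * (real b + 1)"
  by (simp add: algebra_simps)

lemma pb_tT: "pb (cx tT)"
proof (rule pbI[of "Kc / (1 + rho)" _ 1])
  show "0 \<le> Kc / (1 + rho)" using Kc_pos rho_pos by simp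
  fix j b
  have "norm (cx tT (j,b)) = T j b" using T_nonneg by (simp add: cx_def tT_def)
  also have "\<dots> \<le> Kc / (1 + rho) * (real j + real b)" by (rule T_bound)
  also have "\<dots> \<le> Kc / (1 + rho) * ((real j + 1) * (real b + 1))"
    by (rule mult_left_mono[OF jb_le]) (use Kc_pos rho_pos in simp)
  finally show "norm (cx tT (j,b)) \<le> Kc / (1 + rho) * ((real j + 1) * (real b + 1)) ^ 1" by simp
qed

lemma pb_tA: "pb (cx tA)"
proof (rule pbI[of "(Kc + Kc * q / (1 - q)) * (1 / ((1 - q) * (1 + rho)))" _ 1])
  have c0: "0 \<le> 1 / ((1 - q) * (1 + rho))" using q_lt1 rho_pos by simp
  have k0: "0 \<le> Kc * q / (1 - q)" using Kc_pos q_pos q_lt1 by simp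
  show "0 \<le> (Kc + Kc * q / (1 - q)) * (1 / ((1 - q) * (1 + rho)))"
    using Kc_pos k0 c0 by simp
  fix j b
  define B where "B = (real j + 1) * (real b + 1)"
  have B1: "1 \<le> B" unfolding B_def by (rule base_ge1)
  have jb: "real j + real b + 1 \<le> B" unfolding B_def by (simp add: algebra_simps)
  have "norm (cx tA (j,b)) = A j b" using A_nonneg by (simp add: cx_def tA_def)
  also have "\<dots> \<le> (Kc * (real j + real b + 1) + Kc * q / (1 - q)) * (1 / ((1 - q) * (1 + rho)))" by (rule A_bound)
  also have "\<dots> \<le> (Kc * B + Kc * q / (1 - q) * B) * (1 / ((1 - q) * (1 + rho)))"
  proof (rule mult_right_mono[OF _ c0], rule add_mono)
    show "Kc * (real j + real b + 1) \<le> Kc * B" using jb Kc_pos by simp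
    show "Kc * q / (1 - q) \<le> Kc * q / (1 - q) * B" using mult_left_mono[OF B1 k0] by simp
  qed
  also have "\<dots> = (Kc + Kc * q / (1 - q)) * (1 / ((1 - q) * (1 + rho))) * B ^ 1" by (simp add: algebra_simps)
  finally show "norm (cx tA (j,b)) \<le> (Kc + Kc * q / (1 - q)) * (1 / ((1 - q) * (1 + rho))) * ((real j + 1) * (real b + 1)) ^ 1"
    by (simp add: B_def)
qed

lemma pb_tE: "pb (cx tE)"
proof -
  have "pb (\<lambda>x. cx tT x + complex_of_real q * cx tA x)" by (rule pb_add[OF pb_tT pb_cmult[OF pb_tA]])
  note pb_j0[OF this]
  then show ?thesis by (rule pb_mono) (auto simp: cx_def tE_def tT_def tA_def simp flip: of_real_mult of_real_add)
qed

lemma pb_tL: "pb (cx tL)"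
proof (rule pbI[of 1 _ 1])
  fix j b
  show "norm (cx tL (j,b)) \<le> 1 * ((real j + 1) * (real b + 1)) ^ 1"
    using jb_le[of j b] by (auto simp: cx_def tL_def)
qed simp

lemma cx_aj: "cx aj = (\<lambda>(j,b). of_nat j * cx tA (j,b))" by (auto simp: fun_eq_iff cx_def aj_def tA_def)
lemma cx_ab: "cx ab = (\<lambda>(j,b). of_nat b * cx tA (j,b))" by (auto simp: fun_eq_iff cx_def ab_def tA_def)
lemma cx_eb: "cx eb = (\<lambda>(j,b). of_nat b * cx tE (j,b))" by (auto simp: fun_eq_iff cx_def eb_def)

lemma pb_aj: "pb (cx aj)" unfolding cx_aj using pb_tA by blast
lemma pb_ab: "pb (cx ab)" unfolding cx_ab using pb_tA by blast
lemma pb_eb: "pb (cx eb)" unfolding cx_eb using pb_tE by blast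

lemma nq: "norm (complex_of_real q) < 1" using q_pos q_lt1 by simp

lemma E1_eq:
  assumes "norm w < 1" "norm z < 1"
  shows "E1 rho q w z = - PS2 (cx tT) w z"
proof -
  have "infsum (\<lambda>(n, b). complex_of_real (mean_sojourn rho q n b) * w ^ n * z ^ b) (UNIV \<times> {1..})
      = infsum (\<lambda>(j,b). cx tT (j,b) * w ^ j * z ^ b) UNIV"
  proof (rule infsum_cong_neutral)
    fix x :: "nat \<times> nat" assume "x \<in> UNIV - UNIV \<times> {1..}"
    then obtain n where "x = (n, 0)" by (cases x) auto
    then show "(\<lambda>(j,b). cx tT (j,b) * w ^ j * z ^ b) x = 0" by (simp add: cx_def tT_def T_absorb)
  qed (auto simp: cx_def tT_def T_def)
  then show ?thesis unfolding E1_def PS2_def by simp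
qed

lemma HE:
  assumes "norm w < 1" "norm z < 1"
  shows "(w - complex_of_real q) * PS2 (cx tA) w z = PS2 (cx tT) w z - PS2 (cx tE) w z"
proof -
  have h1: "HSr w z (\<lambda>x. su tA x + (-q) * tA x) (w * PS2 (cx tA) w z + complex_of_real (-q) * PS2 (cx tA) w z)"
    by (intro HSr_add HSr_cmult HSr_su HSr_PS2 pb_tA assms)
  have h2: "HSr w z (\<lambda>x. tT x + (-1) * tE x) (PS2 (cx tT) w z + complex_of_real (-1) * PS2 (cx tE) w z)"
    by (intro HSr_add HSr_cmult HSr_PS2 pb_tT pb_tE assms)
  have eq: "(\<lambda>x. su tA x + (-q) * tA x) = (\<lambda>x. tT x + (-1) * tE x)"
  proof
    fix x :: "nat \<times> nat"
    obtain j b where x: "x = (j,b)" by (cases x)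
    show "su tA x + (-q) * tA x = tT x + (-1) * tE x"
    proof (cases j)
      case 0 then show ?thesis by (simp add: x su_def tA_def tT_def tE_def)
    next
      case (Suc i)
      then show ?thesis using A_shift[of i b] by (simp add: x su_def tA_def tT_def tE_def)
    qed
  qed
  have "w * PS2 (cx tA) w z + complex_of_real (-q) * PS2 (cx tA) w z = PS2 (cx tT) w z + complex_of_real (-1) * PS2 (cx tE) w z"
    using HSr_unique[OF h1[unfolded eq] h2] .
  then show ?thesis by (simp add: algebra_simps)
qed

lemma Eind: "PS2 (cx tE) w z = PS2 (cx tE) w' z"
proof -
  have "(\<lambda>(j,b). cx tE (j,b) * w ^ j * z ^ b) = (\<lambda>(j,b). cx tE (j,b) * w' ^ j * z ^ b)"
    by (auto simp: fun_eq_iff cx_def tE_def)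
  then show ?thesis unfolding PS2_def by simp
qed

lemma E1v_eq:
  assumes "norm w < 1" "norm y < 1"
  shows "E1v rho q y = - PS2 (cx tE) w y"
proof -
  have "E1v rho q y = - PS2 (cx tT) (complex_of_real q) y" unfolding E1v_def by (rule E1_eq[OF nq assms(2)])
  also have "PS2 (cx tT) (complex_of_real q) y = PS2 (cx tE) (complex_of_real q) y"
    using HE[OF nq assms(2)] by simp
  also have "\<dots> = PS2 (cx tE) w y" by (rule Eind)
  finally show ?thesis .
qed

lemma E1_split:
  assumes "norm y < 1" "norm z < 1"
  shows "E1 rho q y z = - ((y - complex_of_real q) * PS2 (cx tA) y z) - PS2 (cx tE) 0 z"
  using E1_eq[OF assms] HE[OF assms] Eind[of y z 0] by (simp add: algebra_simps)

lemma F1_eq: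
  assumes "norm w < 1" "norm z < 1"
  shows "F1 rho q w z = - PS2 (cx tA) w z"
proof (cases "w = complex_of_real q")
  case True
  obtain DA where dA: "((\<lambda>y. PS2 (cx tA) y z) has_field_derivative DA) (at w)"
    using deriv_u_mult(1)[OF pb_tA assms] by blast
  have d1: "((\<lambda>y. - ((y - complex_of_real q) * PS2 (cx tA) y z) - PS2 (cx tE) 0 z) has_field_derivative
      (- ((1 - 0) * PS2 (cx tA) w z + DA * (w - complex_of_real q)) - 0)) (at w)"
    by (intro DERIV_diff DERIV_minus DERIV_mult DERIV_ident DERIV_const dA)
  have d2: "((\<lambda>y. E1 rho q y z) has_field_derivative (- ((1 - 0) * PS2 (cx tA) w z + DA * (w - complex_of_real q)) - 0)) (at w)"
  proof (rule has_field_derivative_transform_within_open[OF d1, of "ball 0 1"])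
    show "w \<in> ball 0 1" using assms by simp
    fix y :: complex assume "y \<in> ball 0 1"
    then show "- ((y - complex_of_real q) * PS2 (cx tA) y z) - PS2 (cx tE) 0 z = E1 rho q y z"
      using E1_split[of y z] assms by simp
  qed auto
  show ?thesis using DERIV_imp_deriv[OF d2] True by (simp add: F1_def)
next
  case False
  have "F1 rho q w z = (E1 rho q w z - E1 rho q (complex_of_real q) z) / (w - complex_of_real q)"
    using False by (simp add: F1_def)
  also have "E1 rho q w z - E1 rho q (complex_of_real q) z = - ((w - complex_of_real q) * PS2 (cx tA) w z)"
    using E1_split[OF assms] E1_split[OF nq assms(2)] by simp
  finally show ?thesis using False by simp
qed

lemma Du:
  assumes "norm w < 1" "norm z < 1"
  shows "w * deriv (\<lambda>y. F1 rho q y z) w = - PS2 (cx aj) w z"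
proof -
  define D where "D = PS2 (\<lambda>(j,b). of_nat (Suc j) * cx tA (Suc j, b)) w z"
  have d: "((\<lambda>y. - PS2 (cx tA) y z) has_field_derivative - D) (at w)"
    unfolding D_def by (intro DERIV_minus deriv_u_mult(1)[OF pb_tA assms])
  have d2: "((\<lambda>y. F1 rho q y z) has_field_derivative - D) (at w)"
  proof (rule has_field_derivative_transform_within_open[OF d, of "ball 0 1"])
    fix y :: complex assume "y \<in> ball 0 1"
    then show "- PS2 (cx tA) y z = F1 rho q y z" using F1_eq[of y z] assms by simp
  qed (use assms in auto)
  have "w * deriv (\<lambda>y. F1 rho q y z) w = - (w * D)" using DERIV_imp_deriv[OF d2] by simp
  also have "w * D = PS2 (cx aj) w z" unfolding D_def cx_aj by (rule deriv_u_mult(2)[OF pb_tA assms])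
  finally show ?thesis .
qed

lemma Dv:
  assumes "norm w < 1" "norm z < 1"
  shows "z * deriv (\<lambda>y. F1 rho q w y) z = - PS2 (cx ab) w z"
proof -
  define D where "D = PS2 (\<lambda>(j,b). of_nat (Suc b) * cx tA (j, Suc b)) w z"
  have d: "((\<lambda>y. - PS2 (cx tA) w y) has_field_derivative - D) (at z)"
    unfolding D_def by (intro DERIV_minus deriv_v_mult(1)[OF pb_tA assms])
  have d2: "((\<lambda>y. F1 rho q w y) has_field_derivative - D) (at z)"
  proof (rule has_field_derivative_transform_within_open[OF d, of "ball 0 1"])
    fix y :: complex assume "y \<in> ball 0 1"
    then show "- PS2 (cx tA) w y = F1 rho q w y" using F1_eq[of w y] assms by simp
  qed (use assms in auto)
  have "z * deriv (\<lambda>y. F1 rho q w y) z = - (z * D)" using DERIV_imp_deriv[OF d2] by simp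
  also have "z * D = PS2 (cx ab) w z" unfolding D_def cx_ab by (rule deriv_v_mult(2)[OF pb_tA assms])
  finally show ?thesis .
qed

lemma DE:
  assumes "norm w < 1" "norm z < 1"
  shows "z * deriv (E1v rho q) z = - PS2 (cx eb) w z"
proof -
  define D where "D = PS2 (\<lambda>(j,b). of_nat (Suc b) * cx tE (j, Suc b)) w z"
  have d: "((\<lambda>y. - PS2 (cx tE) w y) has_field_derivative - D) (at z)"
    unfolding D_def by (intro DERIV_minus deriv_v_mult(1)[OF pb_tE assms])
  have d2: "(E1v rho q has_field_derivative - D) (at z)"
  proof (rule has_field_derivative_transform_within_open[OF d, of "ball 0 1"])
    fix y :: complex assume "y \<in> ball 0 1"
    then show "- PS2 (cx tE) w y = E1v rho q y" using E1v_eq[of w y] assms by simp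
  qed (use assms in auto)
  have "z * deriv (E1v rho q) z = - (z * D)" using DERIV_imp_deriv[OF d2] by simp
  also have "z * D = PS2 (cx eb) w z" unfolding D_def cx_eb by (rule deriv_v_mult(2)[OF pb_tE assms])
  finally show ?thesis .
qed

end


context qs begin

lemma PL:
  assumes "norm w < 1" "norm z < 1"
  shows "PS2 (cx tL) w z = L10 w z"
proof -
  define c' where "c' = (\<lambda>(j,b). cx tL (b,j))"
  have pc: "pb c'" unfolding c'_def using pb_tL by blast
  have inner: "infsum (\<lambda>b. c' (j,b) * w ^ b) UNIV = (if j = 0 then 0 else k1 j w)" for j
  proof -
    have sm: "(\<lambda>b. c' (j,b) * w ^ b) summable_on UNIV" by (rule pb_inner_summable[OF pc assms(1)])
    have s: "(\<lambda>b. c' (j,b) * w ^ b) sums (if j = 0 then 0 else k1 j w)"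
    proof (cases "j = 0")
      case True
      then show ?thesis by (simp add: c'_def cx_def tL_def)
    next
      case False
      have "(\<lambda>b. - (w ^ b * of_nat b) - of_nat j * w ^ b) sums (- (w / (1 - w)\<^sup>2) - of_nat j * (1 / (1 - w)))"
        by (intro sums_diff sums_minus sums_mult geometric_sums_times_n geometric_sums assms)
      moreover have "(\<lambda>b. - (w ^ b * of_nat b) - of_nat j * w ^ b) = (\<lambda>b. c' (j,b) * w ^ b)"
        using False by (auto simp: fun_eq_iff c'_def cx_def tL_def algebra_simps)
      moreover have "- (w / (1 - w)\<^sup>2) - of_nat j * (1 / (1 - w)) = k1 j w"
        by (simp add: k1_def)
      ultimately show ?thesis using False by simp
    qed
    have "(\<lambda>b. c' (j,b) * w ^ b) sums infsum (\<lambda>b. c' (j,b) * w ^ b) UNIV"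
      by (rule has_sum_imp_sums) (use sm in simp)
    then show ?thesis using s sums_unique2 by blast
  qed
  define f where "f = (\<lambda>j. (if j = 0 then 0 else k1 j w) * z ^ j)"
  have "(\<lambda>n. f (Suc n)) sums L10 w z"
    using L10_sums[OF assms] by (simp add: f_def)
  then have fs: "f sums (L10 w z + f 0)" by (rule sums_Suc_iff[THEN iffD1])
  have "PS2 (cx tL) w z = PS2 c' z w" unfolding c'_def by (rule PS2_swap[OF pb_tL assms])
  also have "\<dots> = (\<Sum>j. infsum (\<lambda>b. c' (j,b) * w ^ b) UNIV * z ^ j)" by (rule PS2_iter(2)[OF pc assms(2,1)])
  also have "\<dots> = suminf f" by (simp add: inner f_def)
  also have "\<dots> = L10 w z" using fs by (simp add: f_def sums_iff)
  finally show ?thesis .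
qed

lemma main_qs:
  assumes "norm u < 1" "norm v < 1"
  shows "u * P0 rho q u * deriv (\<lambda>w. F1 rho q w v) u
       + v * (complex_of_real (rho * (1 - q)) - (1 + complex_of_real rho - v) * (u - complex_of_real q))
           * deriv (\<lambda>w. F1 rho q u w) v
       + (u * (u - 1 - complex_of_real rho) + (u - complex_of_real q) * (u + v)) * F1 rho q u v
       + L1 rho q u v = 0"
proof -
  have HS: "HSr u v Ctot (complex_of_real (-(rho+q)) * PS2 (cx aj) u v + (complex_of_real (1+rho+q) * (u * PS2 (cx aj) u v) + (complex_of_real (-1) * (u * (u * PS2 (cx aj) u v)) + (complex_of_real (-(rho+q)) * PS2 (cx ab) u v + (complex_of_real (1+rho) * (u * PS2 (cx ab) u v) + (complex_of_real q * (v * PS2 (cx ab) u v) + (complex_of_real (-1) * (u * (v * PS2 (cx ab) u v)) + (complex_of_real (-2) * (u * (u * PS2 (cx tA) u v)) + (complex_of_real (1+rho+q) * (u * PS2 (cx tA) u v) + (complex_of_real (-1) * (u * (v * PS2 (cx tA) u v)) + (complex_of_real q * (v * PS2 (cx tA) u v) + (complex_of_real 1 * PS2 (cx tL) u v + (complex_of_real (-1) * (u * PS2 (cx tE) u v) + (complex_of_real (-1) * (v * PS2 (cx tE) u v) + (complex_of_real (1+rho) * PS2 (cx eb) u v + complex_of_real (-1) * (v * PS2 (cx eb) u v))))))))))))))))"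
    unfolding Ctot_def
    by (intro HSr_add HSr_cmult HSr_su HSr_sv HSr_PS2 pb_aj pb_ab pb_tA pb_tL pb_tE pb_eb assms)
  note X0 = HSr_zero[OF HS Ctot_zero]
  have e1: "u * deriv (\<lambda>w. F1 rho q w v) u = - PS2 (cx aj) u v" by (rule Du[OF assms])
  have e2: "v * deriv (\<lambda>w. F1 rho q u w) v = - PS2 (cx ab) u v" by (rule Dv[OF assms])
  have e3: "F1 rho q u v = - PS2 (cx tA) u v" by (rule F1_eq[OF assms])
  have e4: "E1v rho q v = - PS2 (cx tE) u v" by (rule E1v_eq[OF assms])
  have e5: "v * deriv (E1v rho q) v = - PS2 (cx eb) u v" by (rule DE[OF assms])
  have e6: "L10 u v = PS2 (cx tL) u v" by (rule PL[OF assms, symmetric])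
  have "u * P0 rho q u * deriv (\<lambda>w. F1 rho q w v) u
       + v * (complex_of_real (rho * (1 - q)) - (1 + complex_of_real rho - v) * (u - complex_of_real q))
           * deriv (\<lambda>w. F1 rho q u w) v
       + (u * (u - 1 - complex_of_real rho) + (u - complex_of_real q) * (u + v)) * F1 rho q u v
       + L1 rho q u v
     = P0 rho q u * (u * deriv (\<lambda>w. F1 rho q w v) u)
       + (complex_of_real (rho * (1 - q)) - (1 + complex_of_real rho - v) * (u - complex_of_real q))
           * (v * deriv (\<lambda>w. F1 rho q u w) v)
       + (u * (u - 1 - complex_of_real rho) + (u - complex_of_real q) * (u + v)) * F1 rho q u v
       + (L10 u v + (u + v) * E1v rho q v - (1 + complex_of_real rho - v) * (v * deriv (E1v rho q) v))"
    unfolding L1_def by (simp add: algebra_simps)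
  also have "\<dots> = complex_of_real (-(rho+q)) * PS2 (cx aj) u v + (complex_of_real (1+rho+q) * (u * PS2 (cx aj) u v) + (complex_of_real (-1) * (u * (u * PS2 (cx aj) u v)) + (complex_of_real (-(rho+q)) * PS2 (cx ab) u v + (complex_of_real (1+rho) * (u * PS2 (cx ab) u v) + (complex_of_real q * (v * PS2 (cx ab) u v) + (complex_of_real (-1) * (u * (v * PS2 (cx ab) u v)) + (complex_of_real (-2) * (u * (u * PS2 (cx tA) u v)) + (complex_of_real (1+rho+q) * (u * PS2 (cx tA) u v) + (complex_of_real (-1) * (u * (v * PS2 (cx tA) u v)) + (complex_of_real q * (v * PS2 (cx tA) u v) + (complex_of_real 1 * PS2 (cx tL) u v + (complex_of_real (-1) * (u * PS2 (cx tE) u v) + (complex_of_real (-1) * (v * PS2 (cx tE) u v) + (complex_of_real (1+rho) * PS2 (cx eb) u v + complex_of_real (-1) * (v * PS2 (cx eb) u v)))))))))))))))"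
    unfolding e1 e2 e3 e4 e5 e6 P0_def by (simp add: algebra_simps)
  also have "\<dots> = 0" by (rule X0)
  finally show ?thesis .
qed

end

theorem mainTheorem12:
  fixes rho q :: real and u v :: complex
  assumes "0 < rho" and "0 < q" and "q < 1" and "rho + q < 1"
    and "norm u < 1" and "norm v < 1"
  shows "u * P0 rho q u * deriv (\<lambda>w. F1 rho q w v) u
       + v * (complex_of_real (rho * (1 - q)) - (1 + complex_of_real rho - v) * (u - complex_of_real q))
           * deriv (\<lambda>w. F1 rho q u w) v
       + (u * (u - 1 - complex_of_real rho) + (u - complex_of_real q) * (u + v)) * F1 rho q u v
       + L1 rho q u v = 0
     \<and> (\<lambda>b. k1 (Suc b) u * v ^ Suc b) sums L10 u v"
proof -
  interpret qs rho q by unfold_locales (use assms in auto)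
  show ?thesis using main_qs[OF assms(5,6)] L10_sums[OF assms(5,6)] by simp
qed


end
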